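(* Let $G$ be a locally compact Hausdorff group acting continuously on a locally compact Hausdorff space $X$. Then $C_0(X)$ is a principal (respectively numerable principal) $G$-$C_0(Y)$-algebra for some locally compact Hausdorff $G$-space $Y$ if and only if $X\to X/G$ is a principal (respectively numerable principal) $G$-bundle.
   Context: $C_0(X)$ carries the action $(\alpha_gf)(x)=f(xg)$. A principal $G$-bundle $Y\to Y/G$: $Y$ has an open cover by $G$-invariant sets $U$ each admitting a continuous $G$-equivariant map $U\to G$; numerable if such a cover admits a subordinate partition of unity. A C*-algebra $A$ with $G$-action is a principal $G$-$C_0(Y)$-algebra if there is a $G$-equivariant $*$-homomorphism $\chi:C_0(Y)\to ZM(A)$ (center of the multiplier algebra, with the extended action), where $Y$ is a locally compact Hausdorff $G$-space with $Y\to Y/G$ a principal $G$-bundle, such that $\chi(C_0(Y))A$ is norm-dense in $A$; numerable if $Y\to Y/G$ is numerable. *)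

theory Defs
  imports "HOL-Analysis.Analysis" "HOL-Algebra.Group"
begin

definition topological_group :: "('g, 'm) monoid_scheme \<Rightarrow> 'g topology \<Rightarrow> bool" where
  "topological_group G TG \<longleftrightarrow> group G \<and> topspace TG = carrier G \<and>
     continuous_map (prod_topology TG TG) TG (\<lambda>(g, h). g \<otimes>\<^bsub>G\<^esub> h) \<and>
     continuous_map TG TG (\<lambda>g. inv\<^bsub>G\<^esub> g)"

definition right_action ::
  "('g, 'm) monoid_scheme \<Rightarrow> 'g topology \<Rightarrow> 'x topology \<Rightarrow> ('x \<Rightarrow> 'g \<Rightarrow> 'x) \<Rightarrow> bool" where
  "right_action G TG TX act \<longleftrightarrow>
     (\<forall>x\<in>topspace TX. \<forall>g\<in>carrier G. act x g \<in> topspace TX) \<and>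
     (\<forall>x\<in>topspace TX. act x \<one>\<^bsub>G\<^esub> = x) \<and>
     (\<forall>x\<in>topspace TX. \<forall>g\<in>carrier G. \<forall>h\<in>carrier G. act (act x g) h = act x (g \<otimes>\<^bsub>G\<^esub> h)) \<and>
     continuous_map (prod_topology TX TG) TX (\<lambda>(x, g). act x g)"

definition invariant_set :: "('g, 'm) monoid_scheme \<Rightarrow> ('x \<Rightarrow> 'g \<Rightarrow> 'x) \<Rightarrow> 'x set \<Rightarrow> bool" where
  "invariant_set G act U \<longleftrightarrow> (\<forall>y\<in>U. \<forall>g\<in>carrier G. act y g \<in> U)"

definition principal_cover ::
  "('g, 'm) monoid_scheme \<Rightarrow> 'g topology \<Rightarrow> 'y topology \<Rightarrow> ('y \<Rightarrow> 'g \<Rightarrow> 'y) \<Rightarrow> 'y set set \<Rightarrow> bool" where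
  "principal_cover G TG TY act \<U> \<longleftrightarrow>
     \<Union>\<U> = topspace TY \<and>
     (\<forall>U\<in>\<U>. openin TY U \<and> invariant_set G act U \<and>
        (\<exists>\<phi>. continuous_map (subtopology TY U) TG \<phi> \<and>
              (\<forall>y\<in>U. \<forall>g\<in>carrier G. \<phi> (act y g) = \<phi> y \<otimes>\<^bsub>G\<^esub> g)))"

definition principal_bundle ::
  "('g, 'm) monoid_scheme \<Rightarrow> 'g topology \<Rightarrow> 'y topology \<Rightarrow> ('y \<Rightarrow> 'g \<Rightarrow> 'y) \<Rightarrow> bool" where
  "principal_bundle G TG TY act \<longleftrightarrow> (\<exists>\<U>. principal_cover G TG TY act \<U>)"

text \<open>Partition of unity on the orbit space Y/G subordinate to the (invariant) cover,
  expressed through G-invariant functions on Y (functions on Y/G), supports taken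
  in Y (for the open orbit map, preimage of closure = closure of preimage),
  local finiteness witnessed by G-invariant open sets (= open sets of Y/G).\<close>
definition numerable_principal_bundle ::
  "('g, 'm) monoid_scheme \<Rightarrow> 'g topology \<Rightarrow> 'y topology \<Rightarrow> ('y \<Rightarrow> 'g \<Rightarrow> 'y) \<Rightarrow> bool" where
  "numerable_principal_bundle G TG TY act \<longleftrightarrow>
     (\<exists>\<U> (\<rho> :: 'y set \<Rightarrow> 'y \<Rightarrow> real). principal_cover G TG TY act \<U> \<and>
        (\<forall>U\<in>\<U>. continuous_map TY euclideanreal (\<rho> U) \<and>
           (\<forall>y\<in>topspace TY. \<forall>g\<in>carrier G. \<rho> U (act y g) = \<rho> U y) \<and>
           (\<forall>y\<in>topspace TY. 0 \<le> \<rho> U y) \<and>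
           TY closure_of {y \<in> topspace TY. \<rho> U y \<noteq> 0} \<subseteq> U) \<and>
        (\<forall>y\<in>topspace TY. \<exists>W. openin TY W \<and> invariant_set G act W \<and> y \<in> W \<and>
           finite {U\<in>\<U>. W \<inter> (TY closure_of {z \<in> topspace TY. \<rho> U z \<noteq> 0}) \<noteq> {}}) \<and>
        (\<forall>y\<in>topspace TY. (\<Sum>U\<in>{U\<in>\<U>. \<rho> U y \<noteq> 0}. \<rho> U y) = 1))"

definition C0 :: "'x topology \<Rightarrow> ('x \<Rightarrow> complex) set" where
  "C0 TX = {f. continuous_map TX euclidean f \<and> (\<forall>x. x \<notin> topspace TX \<longrightarrow> f x = 0) \<and>
               (\<forall>e>0. compactin TX {x \<in> topspace TX. e \<le> norm (f x)})}"

definition transl :: "'x topology \<Rightarrow> ('x \<Rightarrow> 'g \<Rightarrow> 'x) \<Rightarrow> 'g \<Rightarrow> ('x \<Rightarrow> complex) \<Rightarrow> ('x \<Rightarrow> complex)" where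
  "transl TX act g f = (\<lambda>x. if x \<in> topspace TX then f (act x g) else 0)"

type_synonym 'x mult = "(('x \<Rightarrow> complex) \<Rightarrow> ('x \<Rightarrow> complex)) \<times> (('x \<Rightarrow> complex) \<Rightarrow> ('x \<Rightarrow> complex))"

definition fmul :: "('x \<Rightarrow> complex) \<Rightarrow> ('x \<Rightarrow> complex) \<Rightarrow> ('x \<Rightarrow> complex)" where
  "fmul a b = (\<lambda>x. a x * b x)"

definition fstar :: "('x \<Rightarrow> complex) \<Rightarrow> ('x \<Rightarrow> complex)" where
  "fstar a = (\<lambda>x. cnj (a x))"

text \<open>Double centralizers (L, R) of A: a (L b) = (R a) b.\<close>
definition multipliers :: "('x \<Rightarrow> complex) set \<Rightarrow> 'x mult set" where
  "multipliers A = {(L, R). L \<in> A \<rightarrow>\<^sub>E A \<and> R \<in> A \<rightarrow>\<^sub>E A \<and>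
                      (\<forall>a\<in>A. \<forall>b\<in>A. fmul a (L b) = fmul (R a) b)}"

definition mmult :: "('x \<Rightarrow> complex) set \<Rightarrow> 'x mult \<Rightarrow> 'x mult \<Rightarrow> 'x mult" where
  "mmult A m n = (compose A (fst m) (fst n), compose A (snd n) (snd m))"

definition madd :: "('x \<Rightarrow> complex) set \<Rightarrow> 'x mult \<Rightarrow> 'x mult \<Rightarrow> 'x mult" where
  "madd A m n = (restrict (\<lambda>a x. fst m a x + fst n a x) A, restrict (\<lambda>a x. snd m a x + snd n a x) A)"

definition mscale :: "('x \<Rightarrow> complex) set \<Rightarrow> complex \<Rightarrow> 'x mult \<Rightarrow> 'x mult" where
  "mscale A c m = (restrict (\<lambda>a x. c * fst m a x) A, restrict (\<lambda>a x. c * snd m a x) A)"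

definition madj :: "('x \<Rightarrow> complex) set \<Rightarrow> 'x mult \<Rightarrow> 'x mult" where
  "madj A m = (restrict (\<lambda>a. fstar (snd m (fstar a))) A, restrict (\<lambda>a. fstar (fst m (fstar a))) A)"

definition center_multipliers :: "('x \<Rightarrow> complex) set \<Rightarrow> 'x mult set" where
  "center_multipliers A = {m \<in> multipliers A. \<forall>n\<in>multipliers A. mmult A m n = mmult A n m}"

definition mact :: "('g, 'm) monoid_scheme \<Rightarrow> ('x \<Rightarrow> complex) set \<Rightarrow>
    ('g \<Rightarrow> ('x \<Rightarrow> complex) \<Rightarrow> ('x \<Rightarrow> complex)) \<Rightarrow> 'g \<Rightarrow> 'x mult \<Rightarrow> 'x mult" where
  "mact G A \<beta> g m = (restrict (\<lambda>a. \<beta> g (fst m (\<beta> (inv\<^bsub>G\<^esub> g) a))) A,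
                      restrict (\<lambda>a. \<beta> g (snd m (\<beta> (inv\<^bsub>G\<^esub> g) a))) A)"

text \<open>A (a C*-algebra of functions, here C_0(X)) with G-action beta is a G-C_0(Y)-algebra
  through chi: G-equivariant *-homomorphism C_0(Y) -> ZM(A) with chi(C_0(Y))A
  having norm-dense linear span in A.\<close>
definition G_C0_algebra_via ::
  "('g, 'm) monoid_scheme \<Rightarrow> 'x topology \<Rightarrow> ('g \<Rightarrow> ('x \<Rightarrow> complex) \<Rightarrow> ('x \<Rightarrow> complex)) \<Rightarrow>
   'y topology \<Rightarrow> ('y \<Rightarrow> 'g \<Rightarrow> 'y) \<Rightarrow> (('y \<Rightarrow> complex) \<Rightarrow> 'x mult) \<Rightarrow> bool" where
  "G_C0_algebra_via G TX \<beta> TY actY chi \<longleftrightarrow>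
     (let A = C0 TX in
      (\<forall>f\<in>C0 TY. chi f \<in> center_multipliers A) \<and>
      (\<forall>f\<in>C0 TY. \<forall>h\<in>C0 TY. chi (\<lambda>y. f y + h y) = madd A (chi f) (chi h)) \<and>
      (\<forall>c. \<forall>f\<in>C0 TY. chi (\<lambda>y. c * f y) = mscale A c (chi f)) \<and>
      (\<forall>f\<in>C0 TY. \<forall>h\<in>C0 TY. chi (fmul f h) = mmult A (chi f) (chi h)) \<and>
      (\<forall>f\<in>C0 TY. chi (fstar f) = madj A (chi f)) \<and>
      (\<forall>g\<in>carrier G. \<forall>f\<in>C0 TY. chi (transl TY actY g f) = mact G A \<beta> g (chi f)) \<and>
      (\<forall>a\<in>A. \<forall>e>0. \<exists>(n::nat) fs bs. (\<forall>i<n. fs i \<in> C0 TY \<and> bs i \<in> A) \<and>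
          (\<forall>x\<in>topspace TX. norm (a x - (\<Sum>i<n. fst (chi (fs i)) (bs i) x)) < e)))"

definition principal_G_C0_algebra ::
  "('g, 'm) monoid_scheme \<Rightarrow> 'g topology \<Rightarrow> 'x topology \<Rightarrow> ('g \<Rightarrow> ('x \<Rightarrow> complex) \<Rightarrow> ('x \<Rightarrow> complex)) \<Rightarrow>
   'y topology \<Rightarrow> ('y \<Rightarrow> 'g \<Rightarrow> 'y) \<Rightarrow> bool" where
  "principal_G_C0_algebra G TG TX \<beta> TY actY \<longleftrightarrow>
     locally_compact_space TY \<and> Hausdorff_space TY \<and> right_action G TG TY actY \<and>
     principal_bundle G TG TY actY \<and> (\<exists>chi. G_C0_algebra_via G TX \<beta> TY actY chi)"

definition numerable_principal_G_C0_algebra ::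
  "('g, 'm) monoid_scheme \<Rightarrow> 'g topology \<Rightarrow> 'x topology \<Rightarrow> ('g \<Rightarrow> ('x \<Rightarrow> complex) \<Rightarrow> ('x \<Rightarrow> complex)) \<Rightarrow>
   'y topology \<Rightarrow> ('y \<Rightarrow> 'g \<Rightarrow> 'y) \<Rightarrow> bool" where
  "numerable_principal_G_C0_algebra G TG TX \<beta> TY actY \<longleftrightarrow>
     principal_G_C0_algebra G TG TX \<beta> TY actY \<and> numerable_principal_bundle G TG TY actY"

end

theory Submission
  imports Defs
begin


lemma closedin_superlevel:
  assumes "continuous_map X euclidean (f::'a \<Rightarrow> complex)"
  shows "closedin X {x\<in>topspace X. e \<le> norm (f x)}"
proof -
  have "closedin euclidean {z::complex. e \<le> norm z}"
    by (simp add: closed_Collect_le continuous_on_const continuous_on_norm_id)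
  from closedin_continuous_map_preimage[OF assms this] show ?thesis by simp
qed

lemma C0I:
  assumes "continuous_map X euclidean f" "\<And>x. x\<notin>topspace X \<Longrightarrow> f x = 0"
    "\<And>e. e>0 \<Longrightarrow> \<exists>K. compactin X K \<and> {x\<in>topspace X. e \<le> norm (f x)} \<subseteq> K"
  shows "f \<in> C0 X"
  unfolding C0_def
proof (intro CollectI conjI allI impI)
  fix e :: real assume "e > 0"
  then obtain K where "compactin X K" "{x\<in>topspace X. e \<le> norm (f x)} \<subseteq> K" using assms(3) by blast
  then show "compactin X {x \<in> topspace X. e \<le> cmod (f x)}"
    using closed_compactin closedin_superlevel[OF assms(1)] by blast
qed (use assms in auto)

lemma C0_cont: "f \<in> C0 X \<Longrightarrow> continuous_map X euclidean f" by (simp add: C0_def)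
lemma C0_out: "f \<in> C0 X \<Longrightarrow> x \<notin> topspace X \<Longrightarrow> f x = 0" by (simp add: C0_def)
lemma C0_cpt: "f \<in> C0 X \<Longrightarrow> e > 0 \<Longrightarrow> compactin X {x\<in>topspace X. e \<le> norm (f x)}" by (simp add: C0_def)

lemma cm_mult [continuous_intros]:
  fixes f :: "'a \<Rightarrow> 'b::real_normed_algebra"
  shows "continuous_map X euclidean f \<Longrightarrow> continuous_map X euclidean g \<Longrightarrow> continuous_map X euclidean (\<lambda>x. f x * g x)"
  by (simp add: continuous_map_atin tendsto_mult)

lemma cm_comp:
  "continuous_map X euclidean f \<Longrightarrow> continuous_on UNIV h \<Longrightarrow> continuous_map X euclidean (\<lambda>x. h (f x))"
  using continuous_map_compose[of X euclidean f euclidean h] by (simp add: o_def)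

lemma C0_add: assumes "f \<in> C0 X" "g \<in> C0 X" shows "(\<lambda>x. f x + g x) \<in> C0 X"
proof -
  have c: "continuous_map X euclidean (\<lambda>x. f x + g x)"
    using assms by (intro continuous_map_add) (auto dest: C0_cont)
  have o: "\<And>x. x\<notin>topspace X \<Longrightarrow> f x + g x = 0" using C0_out[OF assms(1)] C0_out[OF assms(2)] by simp
  have k: "\<exists>K. compactin X K \<and> {x\<in>topspace X. e \<le> norm (f x + g x)} \<subseteq> K" if "e > 0" for e :: real
  proof -
  let ?K = "{x\<in>topspace X. e/2 \<le> norm (f x)} \<union> {x\<in>topspace X. e/2 \<le> norm (g x)}"
  have "compactin X ?K" using assms \<open>e>0\<close> by (intro compactin_Un C0_cpt) auto
  moreover have "{x\<in>topspace X. e \<le> norm (f x + g x)} \<subseteq> ?K"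
  proof (intro subsetI)
    fix x assume "x \<in> {x\<in>topspace X. e \<le> norm (f x + g x)}"
    moreover have "norm (f x + g x) \<le> norm (f x) + norm (g x)" by (rule norm_triangle_ineq)
    ultimately show "x \<in> ?K" by auto
  qed
  ultimately show ?thesis by blast
  qed
  show ?thesis by (rule C0I[OF c o k]) auto
qed

lemma C0_bounded_mult:
  assumes "f \<in> C0 X" "continuous_map X euclidean t" "\<And>x. norm (t x) \<le> M"
  shows "(\<lambda>x. t x * f x) \<in> C0 X"
proof -
  have c: "continuous_map X euclidean (\<lambda>x. t x * f x)"
    using assms by (intro cm_mult) (auto dest: C0_cont)
  have o: "\<And>x. x\<notin>topspace X \<Longrightarrow> t x * f x = 0" using C0_out[OF assms(1)] by simp
  have M0: "0 \<le> M" using assms(3) norm_ge_zero order_trans by blast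
  have k: "\<exists>K. compactin X K \<and> {x\<in>topspace X. e \<le> norm (t x * f x)} \<subseteq> K" if "e > 0" for e :: real
  proof -
  let ?K = "{x\<in>topspace X. e/(M+1) \<le> norm (f x)}"
  have "compactin X ?K" using assms \<open>e>0\<close> M0 by (intro C0_cpt) auto
  moreover have "{x\<in>topspace X. e \<le> norm (t x * f x)} \<subseteq> ?K"
  proof (intro subsetI)
    fix x assume "x \<in> {x\<in>topspace X. e \<le> norm (t x * f x)}"
    then have x: "x \<in> topspace X" "e \<le> norm (t x * f x)" by auto
    have "e \<le> M * norm (f x)" using x(2) assms(3)[of x]
      by (metis norm_ge_zero norm_mult mult_right_mono order_trans)
    also have "\<dots> \<le> (M+1) * norm (f x)" by (simp add: mult_right_mono)
    finally have "e / (M+1) \<le> norm (f x)" using M0 by (simp add: divide_le_eq mult.commute)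
    then show "x \<in> ?K" using x by auto
  qed
  ultimately show ?thesis by blast
  qed
  show ?thesis by (rule C0I[OF c o k]) auto
qed

lemma bump:
  assumes lc: "locally_compact_space X" and hs: "Hausdorff_space X" and V: "openin X V" "y \<in> V"
  obtains r :: "'a \<Rightarrow> real" where "(\<lambda>x. complex_of_real (r x)) \<in> C0 X" "r y = 1"
    "\<And>x. 0 \<le> r x \<and> r x \<le> 1" "\<And>x. x \<notin> V \<Longrightarrow> r x = 0"
proof -
  have reg: "regular_space X" using lc hs locally_compact_Hausdorff_imp_regular_space by blast
  then have nbase: "neighbourhood_base_of (\<lambda>C. compactin X C \<and> closedin X C) X"
    using lc locally_compact_regular_space_neighbourhood_base by blast
  then obtain U M where UM: "openin X U" "compactin X M" "closedin X M" "y \<in> U" "U \<subseteq> M" "M \<subseteq> V"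
    using V unfolding neighbourhood_base_of by metis
  have cr: "completely_regular_space X"
    using lc hs locally_compact_regular_imp_completely_regular_space by blast
  have yt: "y \<in> topspace X" using UM openin_subset by blast
  have "closedin X (topspace X - U)" using UM by blast
  then obtain f :: "'a \<Rightarrow> real" where f: "continuous_map X (top_of_set {0..1}) f" "f y = 0" "f ` (topspace X - U) \<subseteq> {1}"
    using cr yt UM unfolding completely_regular_space_def by (metis DiffD2 DiffI)
  have fr: "continuous_map X euclideanreal f" using f(1) continuous_map_in_subtopology by blast
  have f01: "x \<in> topspace X \<Longrightarrow> 0 \<le> f x \<and> f x \<le> 1" for x
    using f(1) unfolding continuous_map_def by auto
  define r where "r x = (if x \<in> topspace X then 1 - f x else 0)" for x
  have rc: "continuous_map X euclideanreal r"
    by (rule continuous_map_eq[of _ _ "\<lambda>x. 1 - f x"]) (auto simp: r_def intro: continuous_map_diff fr)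
  have r0: "r x = 0" if "x \<notin> U" for x
    using f(3) that by (auto simp: r_def)
  show ?thesis
  proof
    show "r y = 1" using yt f(2) by (simp add: r_def)
    show "0 \<le> r x \<and> r x \<le> 1" for x using f01[of x] by (auto simp: r_def)
    show "r x = 0" if "x \<notin> V" for x using r0 that UM by blast
    show "(\<lambda>x. complex_of_real (r x)) \<in> C0 X"
    proof (rule C0I)
      show "continuous_map X euclidean (\<lambda>x. complex_of_real (r x))"
        by (rule cm_comp[OF rc]) (intro continuous_intros)
      show "complex_of_real (r x) = 0" if "x \<notin> topspace X" for x using that by (simp add: r_def)
      show "\<exists>K. compactin X K \<and> {x \<in> topspace X. e \<le> cmod (complex_of_real (r x))} \<subseteq> K" if "e > 0" for e :: real
        using UM r0 that by (intro exI[of _ M]) force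
    qed
  qed
qed

lemma C0_bounded:
  assumes "f \<in> C0 X" obtains M where "\<And>x. norm (f x) \<le> M"
proof -
  let ?K = "{x\<in>topspace X. 1 \<le> norm (f x)}"
  have K: "compactin X ?K" using C0_cpt[OF assms] by simp
  have "continuous_map X euclideanreal (\<lambda>x. norm (f x))" using C0_cont[OF assms] by (intro continuous_map_norm)
  then have "compactin euclideanreal ((\<lambda>x. norm (f x)) ` ?K)"
    using K image_compactin by blast
  then have "bounded ((\<lambda>x. norm (f x)) ` ?K)" by (simp add: compact_imp_bounded)
  then obtain B where B: "\<And>x. x \<in> ?K \<Longrightarrow> norm (f x) \<le> B"
    unfolding bounded_iff by fastforce
  have "norm (f x) \<le> max 1 B" for x
  proof (cases "x \<in> topspace X")
    case True then show ?thesis using B[of x] by (cases "1 \<le> norm (f x)") auto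
  next
    case False then show ?thesis using C0_out[OF assms False] by simp
  qed
  then show ?thesis using that by blast
qed

lemma C0_comp:
  assumes "f \<in> C0 X" "continuous_on UNIV h" "\<And>z. norm (h z) \<le> C * norm z"
  shows "(\<lambda>x. h (f x)) \<in> C0 X"
proof -
  have c: "continuous_map X euclidean (\<lambda>x. h (f x))" using cm_comp[OF C0_cont[OF assms(1)] assms(2)] .
  have o: "\<And>x. x\<notin>topspace X \<Longrightarrow> h (f x) = 0" using C0_out[OF assms(1)] assms(3)[of 0] by simp
  have C0: "0 \<le> C"
  proof (rule ccontr)
    assume "\<not> 0 \<le> C" then have "C * norm (1::complex) < 0" by simp
    then show False using assms(3)[of 1] norm_ge_zero[of "h 1"] by linarith
  qed
  have k: "\<exists>K. compactin X K \<and> {x\<in>topspace X. e \<le> norm (h (f x))} \<subseteq> K" if "e > 0" for e :: real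
  proof -
  let ?K = "{x\<in>topspace X. e/(C+1) \<le> norm (f x)}"
  have "compactin X ?K" using assms \<open>e>0\<close> C0 by (intro C0_cpt) auto
  moreover have "{x\<in>topspace X. e \<le> norm (h (f x))} \<subseteq> ?K"
  proof (intro subsetI)
    fix x assume "x \<in> {x\<in>topspace X. e \<le> norm (h (f x))}"
    then have x: "x \<in> topspace X" "e \<le> norm (h (f x))" by auto
    have "e \<le> C * norm (f x)" using x(2) assms(3)[of "f x"] by linarith
    also have "\<dots> \<le> (C+1) * norm (f x)" by (simp add: mult_right_mono)
    finally have "e / (C+1) \<le> norm (f x)" using C0 by (simp add: divide_le_eq mult.commute)
    then show "x \<in> ?K" using x by auto
  qed
  ultimately show ?thesis by blast
  qed
  show ?thesis by (rule C0I[OF c o k]) auto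
qed

lemma C0_fmul: assumes "f \<in> C0 X" "g \<in> C0 X" shows "fmul f g \<in> C0 X"
proof -
  obtain M where "\<And>x. norm (f x) \<le> M" using C0_bounded[OF assms(1)] by blast
  from C0_bounded_mult[OF assms(2) C0_cont[OF assms(1)] this] show ?thesis by (simp add: fmul_def)
qed

lemma C0_scale: assumes "f \<in> C0 X" shows "(\<lambda>x. c * f x) \<in> C0 X"
  using C0_bounded_mult[OF assms, of "\<lambda>x. c" "norm c"] by simp

lemma C0_fstar: assumes "f \<in> C0 X" shows "fstar f \<in> C0 X"
  unfolding fstar_def by (rule C0_comp[OF assms, of cnj 1]) (auto intro: continuous_intros)

lemma C0_zero: "(\<lambda>x. 0) \<in> C0 X"
  by (rule C0I) auto

lemma C0_sum: assumes "finite I" "\<And>i. i \<in> I \<Longrightarrow> f i \<in> C0 X" shows "(\<lambda>x. \<Sum>i\<in>I. f i x) \<in> C0 X"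
  using assms by (induction I rule: finite_induct) (auto intro: C0_zero C0_add)




lemma tg_group: "topological_group G TG \<Longrightarrow> group G" by (simp add: topological_group_def)
lemma tg_top: "topological_group G TG \<Longrightarrow> topspace TG = carrier G" by (simp add: topological_group_def)

lemma ra_in: "right_action G TG TY a \<Longrightarrow> y \<in> topspace TY \<Longrightarrow> g \<in> carrier G \<Longrightarrow> a y g \<in> topspace TY"
  by (simp add: right_action_def)
lemma ra_one: "right_action G TG TY a \<Longrightarrow> y \<in> topspace TY \<Longrightarrow> a y \<one>\<^bsub>G\<^esub> = y"
  by (simp add: right_action_def)
lemma ra_comp: "right_action G TG TY a \<Longrightarrow> y \<in> topspace TY \<Longrightarrow> g \<in> carrier G \<Longrightarrow> h \<in> carrier G \<Longrightarrow>
   a (a y g) h = a y (g \<otimes>\<^bsub>G\<^esub> h)"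
  by (simp add: right_action_def)
lemma ra_inv: "right_action G TG TY a \<Longrightarrow> group G \<Longrightarrow> y \<in> topspace TY \<Longrightarrow> g \<in> carrier G \<Longrightarrow>
   a (a y g) (inv\<^bsub>G\<^esub> g) = y"
  by (simp add: ra_comp ra_one group.r_inv group.inv_closed)
lemma ra_inv2: "right_action G TG TY a \<Longrightarrow> group G \<Longrightarrow> y \<in> topspace TY \<Longrightarrow> g \<in> carrier G \<Longrightarrow>
   a (a y (inv\<^bsub>G\<^esub> g)) g = y"
  by (simp add: ra_comp ra_one group.l_inv group.inv_closed)

lemma ra_cont:
  assumes "right_action G TG TY a" "topspace TG = carrier G" "g \<in> carrier G"
  shows "continuous_map TY TY (\<lambda>y. a y g)"
proof -
  have c: "continuous_map (prod_topology TY TG) TY (\<lambda>(x, g). a x g)" using assms(1) by (simp add: right_action_def)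
  have "continuous_map TY (prod_topology TY TG) (\<lambda>y. (y, g))"
    using assms by (intro continuous_map_pairedI) auto
  from continuous_map_compose[OF this c] show ?thesis by (simp add: o_def)
qed

lemma transl_C0:
  assumes ra: "right_action G TG TY a" and tg: "topological_group G TG" and g: "g \<in> carrier G"
    and f: "f \<in> C0 TY"
  shows "transl TY a g f \<in> C0 TY"
proof -
  have grp: "group G" using tg by (rule tg_group)
  have ig: "inv\<^bsub>G\<^esub> g \<in> carrier G" using grp g by simp
  have ca: "continuous_map TY TY (\<lambda>y. a y g)" using ra_cont[OF ra tg_top[OF tg] g] .
  have cai: "continuous_map TY TY (\<lambda>y. a y (inv\<^bsub>G\<^esub> g))" using ra_cont[OF ra tg_top[OF tg] ig] .
  have c: "continuous_map TY euclidean (transl TY a g f)"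
  proof (rule continuous_map_eq[of _ _ "f \<circ> (\<lambda>y. a y g)"])
    show "continuous_map TY euclidean (f \<circ> (\<lambda>y. a y g))"
      using continuous_map_compose[OF ca C0_cont[OF f]] .
  qed (simp add: transl_def)
  have o: "\<And>x. x\<notin>topspace TY \<Longrightarrow> transl TY a g f x = 0" by (simp add: transl_def)
  have k: "\<exists>K. compactin TY K \<and> {x\<in>topspace TY. e \<le> norm (transl TY a g f x)} \<subseteq> K" if "e > 0" for e :: real
  proof (intro exI conjI)
    show "compactin TY ((\<lambda>y. a y (inv\<^bsub>G\<^esub> g)) ` {x\<in>topspace TY. e \<le> norm (f x)})"
      using image_compactin[OF C0_cpt[OF f that] cai] .
    show "{x\<in>topspace TY. e \<le> norm (transl TY a g f x)} \<subseteq> (\<lambda>y. a y (inv\<^bsub>G\<^esub> g)) ` {x\<in>topspace TY. e \<le> norm (f x)}"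
    proof (intro subsetI)
      fix x assume "x \<in> {x\<in>topspace TY. e \<le> norm (transl TY a g f x)}"
      then have x: "x \<in> topspace TY" "e \<le> norm (f (a x g))" by (auto simp: transl_def)
      have "a x g \<in> {x\<in>topspace TY. e \<le> norm (f x)}" using x ra_in[OF ra x(1) g] by simp
      moreover have "x = a (a x g) (inv\<^bsub>G\<^esub> g)" using ra_inv[OF ra grp x(1) g] by simp
      ultimately show "x \<in> (\<lambda>y. a y (inv\<^bsub>G\<^esub> g)) ` {x\<in>topspace TY. e \<le> norm (f x)}" by blast
    qed
  qed
  show ?thesis by (rule C0I[OF c o k]) auto
qed

lemma sep:
  assumes "locally_compact_space X" "Hausdorff_space X" "x \<in> topspace X"
  shows "\<exists>a\<in>C0 X. a x \<noteq> 0"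
proof -
  obtain r where "(\<lambda>x. complex_of_real (r x)) \<in> C0 X" "r x = 1"
    using bump[OF assms(1,2) openin_topspace assms(3)] by metis
  then show ?thesis by (intro bexI[of _ "\<lambda>x. complex_of_real (r x)"]) auto
qed

definition wit :: "('x \<Rightarrow> complex) set \<Rightarrow> 'x \<Rightarrow> ('x \<Rightarrow> complex)" where
  "wit A x = (SOME a. a \<in> A \<and> a x \<noteq> 0)"

definition mfun :: "('x \<Rightarrow> complex) set \<Rightarrow> 'x mult \<Rightarrow> 'x \<Rightarrow> complex" where
  "mfun A m x = snd m (wit A x) x / wit A x x"

lemma wit:
  assumes "locally_compact_space X" "Hausdorff_space X" "x \<in> topspace X"
  shows "wit (C0 X) x \<in> C0 X" "wit (C0 X) x x \<noteq> 0"
  using someI_ex[OF sep[OF assms, unfolded Bex_def]] by (auto simp: wit_def)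

lemma mult_apply:
  assumes lc: "locally_compact_space X" "Hausdorff_space X"
    and m: "m \<in> multipliers (C0 X)" and b: "b \<in> C0 X"
  shows "fst m b x = mfun (C0 X) m x * b x" "snd m b x = mfun (C0 X) m x * b x"
proof -
  obtain L R where mLR: "m = (L, R)" by (cases m)
  have LA: "L \<in> C0 X \<rightarrow> C0 X" and RA: "R \<in> C0 X \<rightarrow> C0 X"
    and eq: "\<And>a b. a \<in> C0 X \<Longrightarrow> b \<in> C0 X \<Longrightarrow> fmul a (L b) = fmul (R a) b"
    using m by (auto simp: multipliers_def mLR)
  have "fst m b x = mfun (C0 X) m x * b x \<and> snd m b x = mfun (C0 X) m x * b x"
  proof (cases "x \<in> topspace X")
    case False
    then show ?thesis using C0_out[OF b False] C0_out[OF funcset_mem[OF LA b] False]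
      C0_out[OF funcset_mem[OF RA b] False] by (simp add: mLR)
  next
    case True
    let ?w = "wit (C0 X) x"
    have w: "?w \<in> C0 X" "?w x \<noteq> 0" using wit[OF lc True] by auto
    have e1: "?w x * L b x = R ?w x * b x" using fun_cong[OF eq[OF w(1) b], of x] by (simp add: fmul_def)
    have e2: "b x * L ?w x = R b x * ?w x" using fun_cong[OF eq[OF b w(1)], of x] by (simp add: fmul_def)
    have e3: "?w x * L ?w x = R ?w x * ?w x" using fun_cong[OF eq[OF w(1) w(1)], of x] by (simp add: fmul_def)
    have m1: "mfun (C0 X) m x = R ?w x / ?w x" by (simp add: mfun_def mLR)
    have Rw: "R ?w x = mfun (C0 X) m x * ?w x" using m1 w(2) by simp
    have "L b x * ?w x = (mfun (C0 X) m x * b x) * ?w x" using e1 Rw by (simp add: algebra_simps)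
    then have L1: "L b x = mfun (C0 X) m x * b x" using w(2) by simp
    have Lw: "L ?w x = mfun (C0 X) m x * ?w x" using e3 w(2) m1 by (simp add: field_simps)
    have R1: "R b x = mfun (C0 X) m x * b x" using e2 Lw w(2) by (simp add: field_simps)
    show ?thesis using L1 R1 by (simp add: mLR)
  qed
  then show "fst m b x = mfun (C0 X) m x * b x" "snd m b x = mfun (C0 X) m x * b x" by auto
qed




definition chiX :: "'x topology \<Rightarrow> ('x \<Rightarrow> complex) \<Rightarrow> 'x mult" where
  "chiX X f = (restrict (fmul f) (C0 X), restrict (fmul f) (C0 X))"

lemma C0_mul: "f \<in> C0 X \<Longrightarrow> g \<in> C0 X \<Longrightarrow> (\<lambda>x. f x * g x) \<in> C0 X"
  using C0_fmul[unfolded fmul_def] .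

lemma chiX_mult: "f \<in> C0 X \<Longrightarrow> chiX X f \<in> multipliers (C0 X)"
  by (auto simp: chiX_def multipliers_def C0_mul fmul_def fun_eq_iff)

lemma chiX_center:
  assumes lc: "locally_compact_space X" "Hausdorff_space X" and f: "f \<in> C0 X"
  shows "chiX X f \<in> center_multipliers (C0 X)"
  unfolding center_multipliers_def
proof (intro CollectI conjI ballI)
  show "chiX X f \<in> multipliers (C0 X)" using chiX_mult[OF f] .
  fix n assume n: "n \<in> multipliers (C0 X)"
  have LA: "fst n \<in> C0 X \<rightarrow> C0 X" and RA: "snd n \<in> C0 X \<rightarrow> C0 X"
    using n by (auto simp: multipliers_def)
  have 1: "fmul f (fst n b) = fst n (fmul f b)" if b: "b \<in> C0 X" for b
    using mult_apply(1)[OF lc n b] mult_apply(1)[OF lc n C0_fmul[OF f b]] by (auto simp: fmul_def fun_eq_iff)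
  have 2: "fmul f (snd n b) = snd n (fmul f b)" if b: "b \<in> C0 X" for b
    using mult_apply(2)[OF lc n b] mult_apply(2)[OF lc n C0_fmul[OF f b]] by (auto simp: fmul_def fun_eq_iff)
  show "mmult (C0 X) (chiX X f) n = mmult (C0 X) n (chiX X f)"
    unfolding mmult_def compose_def chiX_def
    using 1 2 funcset_mem[OF LA] funcset_mem[OF RA] C0_fmul[OF f]
    by (auto intro!: restrict_ext)
qed

lemma chiX_via:
  assumes lc: "locally_compact_space X" "Hausdorff_space X"
    and tg: "topological_group G TG" and ra: "right_action G TG X act"
  shows "G_C0_algebra_via G X (transl X act) X act (chiX X)"
  unfolding G_C0_algebra_via_def Let_def
proof (intro conjI ballI allI impI)
  let ?A = "C0 X"
  have grp: "group G" using tg by (rule tg_group)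
  fix f assume f: "f \<in> ?A"
  show "chiX X f \<in> center_multipliers ?A" using chiX_center[OF lc f] .
  {
    fix h assume h: "h \<in> ?A"
    show "chiX X (\<lambda>y. f y + h y) = madd ?A (chiX X f) (chiX X h)"
      by (auto simp: chiX_def madd_def fmul_def algebra_simps intro!: restrict_ext)
    show "chiX X (fmul f h) = mmult ?A (chiX X f) (chiX X h)"
      using C0_mul[OF h] C0_mul[OF f] by (auto simp: chiX_def mmult_def compose_def fmul_def algebra_simps intro!: restrict_ext)
  }
  fix c show "chiX X (\<lambda>y. c * f y) = mscale ?A c (chiX X f)"
      by (auto simp: chiX_def mscale_def fmul_def algebra_simps intro!: restrict_ext)
next
  let ?A = "C0 X"
  fix f assume f: "f \<in> ?A"
  show "chiX X (fstar f) = madj ?A (chiX X f)"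
    unfolding chiX_def madj_def
  proof -
    have "restrict (fmul (fstar f)) ?A = restrict (\<lambda>a. fstar (restrict (fmul f) ?A (fstar a))) ?A"
    proof (rule restrict_ext)
      fix a assume "a \<in> ?A"
      then have "fstar a \<in> ?A" by (rule C0_fstar)
      then show "fmul (fstar f) a = fstar (restrict (fmul f) ?A (fstar a))"
        by (auto simp: fmul_def fstar_def)
    qed
    then show "(restrict (fmul (fstar f)) ?A, restrict (fmul (fstar f)) ?A) =
      (restrict (\<lambda>a. fstar (snd (restrict (fmul f) ?A, restrict (fmul f) ?A) (fstar a))) ?A,
       restrict (\<lambda>a. fstar (fst (restrict (fmul f) ?A, restrict (fmul f) ?A) (fstar a))) ?A)" by simp
  qed
next
  let ?A = "C0 X"
  have grp: "group G" using tg by (rule tg_group)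
  fix g f assume g: "g \<in> carrier G" and f: "f \<in> ?A"
  have ig: "inv\<^bsub>G\<^esub> g \<in> carrier G" using grp g by simp
  show "chiX X (transl X act g f) = mact G ?A (transl X act) g (chiX X f)"
    unfolding chiX_def mact_def
  proof -
    have "restrict (fmul (transl X act g f)) ?A = restrict (\<lambda>a. transl X act g (restrict (fmul f) ?A (transl X act (inv\<^bsub>G\<^esub> g) a))) ?A"
    proof (rule restrict_ext)
      fix a assume a: "a \<in> ?A"
      have ta: "transl X act (inv\<^bsub>G\<^esub> g) a \<in> ?A" using transl_C0[OF ra tg ig a] .
      have "fmul (transl X act g f) a = transl X act g (fmul f (transl X act (inv\<^bsub>G\<^esub> g) a))"
      proof
        fix x show "fmul (transl X act g f) a x = transl X act g (fmul f (transl X act (inv\<^bsub>G\<^esub> g) a)) x"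
          using ra_in[OF ra _ g, of x] ra_inv[OF ra grp _ g, of x] C0_out[OF a, of x]
          by (auto simp: transl_def fmul_def)
      qed
      then show "fmul (transl X act g f) a = transl X act g (restrict (fmul f) ?A (transl X act (inv\<^bsub>G\<^esub> g) a))"
        using ta by simp
    qed
    then show "(restrict (fmul (transl X act g f)) ?A, restrict (fmul (transl X act g f)) ?A) =
    (restrict (\<lambda>a. transl X act g (fst (restrict (fmul f) ?A, restrict (fmul f) ?A) (transl X act (inv\<^bsub>G\<^esub> g) a))) ?A,
     restrict (\<lambda>a. transl X act g (snd (restrict (fmul f) ?A, restrict (fmul f) ?A) (transl X act (inv\<^bsub>G\<^esub> g) a))) ?A)"
      by simp
  qed
next
  let ?A = "C0 X"
  fix a assume a: "a \<in> ?A"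
  fix e :: real assume e: "e > 0"
  define d where "d = e / 2"
  have d: "d > 0" "d < e" using e by (auto simp: d_def)
  define b where "b x = complex_of_real (min 1 (norm (a x) / d))" for x
  have b: "b \<in> ?A" unfolding b_def
    by (rule C0_comp[OF a, of "\<lambda>z. complex_of_real (min 1 (norm z / d))" "1/d"])
       (use d in \<open>(intro continuous_intros | auto simp: abs_if min_def divide_nonneg_pos)+\<close>)
  show "\<exists>(n::nat) fs bs. (\<forall>i<n. fs i \<in> ?A \<and> bs i \<in> ?A) \<and>
          (\<forall>x\<in>topspace X. cmod (a x - (\<Sum>i<n. fst (chiX X (fs i)) (bs i) x)) < e)"
  proof (rule exI[where x="1::nat"], rule exI[where x="\<lambda>_::nat. b"], rule exI[where x="\<lambda>_::nat. a"], intro conjI allI impI ballI)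
    show "b \<in> ?A" by (rule b)
    show "a \<in> ?A" by (rule a)
    fix x assume x: "x \<in> topspace X"
    let ?t = "min 1 (norm (a x) / d)"
    have s1: "(\<Sum>i<(1::nat). fst (chiX X b) a x) = b x * a x" using a by (simp add: chiX_def fmul_def)
    have "a x - (\<Sum>i<(1::nat). fst (chiX X b) a x) = complex_of_real (1 - ?t) * a x"
      unfolding s1 by (simp add: b_def algebra_simps)
    moreover have "norm (complex_of_real (1 - ?t)) = 1 - ?t"
      by (metis norm_of_real abs_of_nonneg diff_ge_0_iff_ge min.cobounded1)
    ultimately have eq: "cmod (a x - (\<Sum>i<(1::nat). fst (chiX X b) a x)) = (1 - ?t) * norm (a x)"
      by (simp only: norm_mult)
    have "(1 - ?t) * norm (a x) < e"
    proof (cases "norm (a x) \<ge> d")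
      case True then have "?t = 1" using d by (simp add: min_def field_simps)
      then show ?thesis using e by simp
    next
      case False
      then have "0 \<le> ?t" "?t \<le> 1" using d by auto
      then have "(1 - ?t) * norm (a x) \<le> norm (a x)" by (simp add: mult_left_le_one_le)
      then show ?thesis using False d by linarith
    qed
    then show "cmod (a x - (\<Sum>i<(1::nat). fst (chiX X ((\<lambda>_. b) i)) ((\<lambda>_. a) i) x)) < e" using eq by simp
  qed
qed




locale charctr =
  fixes Y :: "'y topology" and \<phi> :: "('y \<Rightarrow> complex) \<Rightarrow> complex"
  assumes lc: "locally_compact_space Y" and hs: "Hausdorff_space Y"
  and add: "\<And>f g. f \<in> C0 Y \<Longrightarrow> g \<in> C0 Y \<Longrightarrow> \<phi> (\<lambda>y. f y + g y) = \<phi> f + \<phi> g"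
  and scl: "\<And>c f. f \<in> C0 Y \<Longrightarrow> \<phi> (\<lambda>y. c * f y) = c * \<phi> f"
  and mul: "\<And>f g. f \<in> C0 Y \<Longrightarrow> g \<in> C0 Y \<Longrightarrow> \<phi> (fmul f g) = \<phi> f * \<phi> g"
  and star: "\<And>f. f \<in> C0 Y \<Longrightarrow> \<phi> (fstar f) = cnj (\<phi> f)"
begin

lemma mul': "f \<in> C0 Y \<Longrightarrow> g \<in> C0 Y \<Longrightarrow> \<phi> (\<lambda>y. f y * g y) = \<phi> f * \<phi> g"
  using mul by (simp add: fmul_def)

lemma zero: "\<phi> (\<lambda>y. 0) = 0"
  using scl[OF C0_zero, of 0] by simp

lemma diff: "f \<in> C0 Y \<Longrightarrow> g \<in> C0 Y \<Longrightarrow> \<phi> (\<lambda>y. f y - g y) = \<phi> f - \<phi> g"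
  using add[of f "\<lambda>y. (-1) * g y"] scl[of g "-1"] C0_scale[of g Y "-1"] by simp

lemma sum: "finite I \<Longrightarrow> (\<And>i. i \<in> I \<Longrightarrow> f i \<in> C0 Y) \<Longrightarrow> \<phi> (\<lambda>y. \<Sum>i\<in>I. f i y) = (\<Sum>i\<in>I. \<phi> (f i))"
proof (induction I rule: finite_induct)
  case empty then show ?case using zero by simp
next
  case (insert i I)
  have "\<phi> (\<lambda>y. \<Sum>i\<in>insert i I. f i y) = \<phi> (\<lambda>y. f i y + (\<Sum>i\<in>I. f i y))"
    using insert by simp
  also have "\<dots> = \<phi> (f i) + \<phi> (\<lambda>y. \<Sum>i\<in>I. f i y)"
    using add[of "f i" "\<lambda>y. \<Sum>i\<in>I. f i y"] insert C0_sum[of I f Y] by simp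
  finally show ?case using insert by simp
qed

lemma sqnorm: "f \<in> C0 Y \<Longrightarrow> \<phi> (\<lambda>y. f y * cnj (f y)) = complex_of_real ((norm (\<phi> f))\<^sup>2)"
proof -
  assume f: "f \<in> C0 Y"
  have "\<phi> (\<lambda>y. f y * cnj (f y)) = \<phi> f * cnj (\<phi> f)"
    using mul[OF f C0_fstar[OF f]] star[OF f] by (simp add: fmul_def fstar_def)
  then show ?thesis by (simp only: complex_norm_square)
qed

lemma bound1:
  assumes r: "r \<in> C0 Y" and b: "\<And>y. norm (r y) \<le> 1"
  shows "norm (\<phi> r) \<le> 1"
proof -
  define n where "n y = complex_of_real (norm (r y))" for y
  have n: "n \<in> C0 Y" unfolding n_def
    by (rule C0_comp[OF r, of "\<lambda>z. complex_of_real (norm z)" 1]) (auto intro!: continuous_intros)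
  define q where "q y = n y * n y" for y
  have q: "q \<in> C0 Y" unfolding q_def using C0_mul[OF n n] .
  have qeq: "q = (\<lambda>y. r y * cnj (r y))"
    by (auto simp: q_def n_def fun_eq_iff complex_norm_square[symmetric] power2_eq_square)
  define t where "t = (norm (\<phi> r))\<^sup>2"
  have pq: "\<phi> q = complex_of_real t" unfolding qeq t_def using sqnorm[OF r] .
  define w where "w y = complex_of_real (norm (r y) * sqrt (max 0 (1 - (norm (r y))\<^sup>2)))" for y
  have w: "w \<in> C0 Y" unfolding w_def
  proof (rule C0_comp[OF r, of "\<lambda>z. complex_of_real (norm z * sqrt (max 0 (1 - (norm z)\<^sup>2)))" 1])
    show "continuous_on UNIV (\<lambda>z. complex_of_real (norm z * sqrt (max 0 (1 - (norm z)\<^sup>2))))"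
      by (intro continuous_intros)
    fix z :: complex
    have "sqrt (max 0 (1 - (norm z)\<^sup>2)) \<le> 1" by (simp add: real_sqrt_le_1_iff)
    moreover have "0 \<le> sqrt (max 0 (1 - (norm z)\<^sup>2))" by simp
    ultimately have "\<bar>norm z * sqrt (max 0 (1 - (norm z)\<^sup>2))\<bar> \<le> norm z"
      by (simp add: abs_mult mult_left_le)
    then show "norm (complex_of_real (norm z * sqrt (max 0 (1 - (norm z)\<^sup>2)))) \<le> 1 * norm z"
      by (simp only: norm_of_real mult_1)
  qed
  have weq: "(\<lambda>y. w y * cnj (w y)) = (\<lambda>y. q y - q y * q y)"
  proof
    fix y
    define a where "a = norm (r y)"
    define sv where "sv = sqrt (max 0 (1 - a\<^sup>2))"
    have "a\<^sup>2 \<le> 1" using b[of y] by (simp add: power_le_one a_def)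
    then have ss: "sv * sv = 1 - a * a" by (simp add: sv_def power2_eq_square)
    have "(a * sv) * (a * sv) = (a * a) * (sv * sv)" by (simp add: algebra_simps)
    also have "\<dots> = (a * a) * (1 - a * a)" by (simp only: ss)
    finally have r1: "(a * sv) * (a * sv) = a * a - (a * a) * (a * a)" by (simp add: algebra_simps)
    have "w y * cnj (w y) = complex_of_real ((a * sv) * (a * sv))" by (simp add: w_def a_def sv_def)
    also have "\<dots> = complex_of_real (a*a - (a*a)*(a*a))" by (simp only: r1)
    also have "\<dots> = q y - q y * q y" by (simp add: q_def n_def a_def)
    finally show "w y * cnj (w y) = q y - q y * q y" .
  qed
  have "complex_of_real ((norm (\<phi> w))\<^sup>2) = \<phi> (\<lambda>y. q y - q y * q y)"
    using sqnorm[OF w] weq by simp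
  also have "\<dots> = \<phi> q - \<phi> q * \<phi> q" using diff[OF q C0_mul[OF q q]] mul'[OF q q] by simp
  also have "\<dots> = complex_of_real (t - t * t)" using pq by simp
  finally have "(norm (\<phi> w))\<^sup>2 = t - t * t" using of_real_eq_iff by blast
  then have "t * (1 - t) = (norm (\<phi> w))\<^sup>2" by (simp add: right_diff_distrib)
  then have "0 \<le> t * (1 - t)" by simp
  moreover have "0 \<le> t" by (simp add: t_def)
  ultimately have "t \<le> 1"
  proof -
    assume a1: "0 \<le> t * (1 - t)" and a2: "0 \<le> t"
    show "t \<le> 1"
    proof (rule ccontr)
      assume "\<not> t \<le> 1"
      then have "0 < t" "1 - t < 0" by auto
      then have "t * (1 - t) < 0" by (rule mult_pos_neg)
      then show False using a1 by simp
    qed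
  qed
  then show ?thesis unfolding t_def by (simp add: power_le_one_iff)
qed

lemma bound2:
  assumes r: "r \<in> C0 Y" and b: "\<And>y. norm (r y) \<le> 1/2"
  shows "norm (\<phi> r) \<le> 1/2"
proof -
  have "norm (2 * r y) \<le> 1" for y using b[of y] by (simp add: norm_mult)
  then have "norm (\<phi> (\<lambda>y. 2 * r y)) \<le> 1"
    by (rule bound1[OF C0_scale[OF r]])
  then show ?thesis using scl[OF r, of 2] by (simp add: norm_mult)
qed

end



lemma C0_sq: "f \<in> C0 X \<Longrightarrow> (\<lambda>x. f x * cnj (f x)) \<in> C0 X"
  using C0_mul[OF _ C0_fstar[unfolded fstar_def]] by blast

context charctr begin

lemma kernel_point:
  assumes f0: "f0 \<in> C0 Y" "\<phi> f0 \<noteq> 0"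
  shows "\<exists>y\<in>topspace Y. \<forall>k\<in>C0 Y. \<phi> k = 0 \<longrightarrow> k y = 0"
proof (rule ccontr)
  assume "\<not> ?thesis"
  then have "\<forall>y\<in>topspace Y. \<exists>k\<in>C0 Y. \<phi> k = 0 \<and> k y \<noteq> 0" by blast
  then obtain ks where ks: "\<And>y. y \<in> topspace Y \<Longrightarrow> ks y \<in> C0 Y \<and> \<phi> (ks y) = 0 \<and> ks y y \<noteq> 0"
    by metis
  define g where "g y = (1 / \<phi> f0) * f0 y" for y
  have g: "g \<in> C0 Y" unfolding g_def by (rule C0_scale[OF f0(1)])
  have "\<phi> g = (1 / \<phi> f0) * \<phi> f0" unfolding g_def by (rule scl[OF f0(1)])
  then have pg: "\<phi> g = 1" using f0(2) by simp
  define C where "C = {y\<in>topspace Y. 1/2 \<le> norm (g y)}"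
  have Ccpt: "compactin Y C" unfolding C_def using C0_cpt[OF g, of "1/2"] by simp
  define Op where "Op y = {z\<in>topspace Y. ks y z \<in> - {0}}" for y
  have Oopen: "openin Y (Op y)" if "y \<in> topspace Y" for y
    unfolding Op_def
    by (rule openin_continuous_map_preimage[OF C0_cont]) (use ks[OF that] in auto)
  have Csub: "C \<subseteq> topspace Y" by (auto simp: C_def)
  have cov: "C \<subseteq> \<Union>(Op ` C)"
  proof
    fix y assume "y \<in> C"
    then have "y \<in> Op y" using ks[of y] Csub by (auto simp: Op_def)
    then show "y \<in> \<Union>(Op ` C)" using \<open>y \<in> C\<close> by blast
  qed
  have opn: "\<forall>U\<in>Op ` C. openin Y U" using Oopen Csub by blast
  have "\<forall>\<U>. (\<forall>U\<in>\<U>. openin Y U) \<and> C \<subseteq> \<Union>\<U> \<longrightarrow> (\<exists>\<F>. finite \<F> \<and> \<F> \<subseteq> \<U> \<and> C \<subseteq> \<Union>\<F>)"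
    using Ccpt unfolding compactin_def by blast
  then have "(\<forall>U\<in>Op ` C. openin Y U) \<and> C \<subseteq> \<Union>(Op ` C) \<longrightarrow> (\<exists>\<F>. finite \<F> \<and> \<F> \<subseteq> Op ` C \<and> C \<subseteq> \<Union>\<F>)"
    by (rule spec)
  then obtain F where F: "finite F" "F \<subseteq> Op ` C" "C \<subseteq> \<Union>F"
    using opn cov by blast
  then obtain T where T: "T \<subseteq> C" "finite T" "F = Op ` T" using finite_subset_image by metis
  have Ttop: "t \<in> T \<Longrightarrow> t \<in> topspace Y" for t using T Csub by blast
  define s where "s y = (\<Sum>t\<in>T. ks t y * cnj (ks t y))" for y
  define S where "S y = (\<Sum>t\<in>T. (norm (ks t y))\<^sup>2)" for y
  have sS: "s y = complex_of_real (S y)" for y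
    unfolding s_def S_def of_real_sum by (simp only: complex_norm_square)
  have s: "s \<in> C0 Y" unfolding s_def
    using T(2) ks Ttop by (intro C0_sum C0_sq) auto
  have ksq: "(\<lambda>y. ks i y * cnj (ks i y)) \<in> C0 Y" if "i \<in> T" for i
    using C0_sq ks Ttop that by blast
  have ps: "\<phi> s = 0" unfolding s_def
  proof -
    have "\<phi> (\<lambda>y. \<Sum>t\<in>T. ks t y * cnj (ks t y)) = (\<Sum>t\<in>T. \<phi> (\<lambda>y. ks t y * cnj (ks t y)))"
      by (rule sum[OF T(2) ksq])
    also have "\<dots> = 0" using sqnorm ks Ttop by (intro sum.neutral) simp
    finally show "\<phi> (\<lambda>y. \<Sum>t\<in>T. ks t y * cnj (ks t y)) = 0" .
  qed
  have S0: "0 \<le> S y" for y by (simp add: S_def sum_nonneg)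
  have Spos: "0 < S y" if "y \<in> C" for y
  proof -
    have "y \<in> \<Union>(Op ` T)" using F(3) T(3) that by blast
    then obtain t where t: "t \<in> T" "y \<in> Op t" by blast
    have "0 < (norm (ks t y))\<^sup>2" using t by (simp add: Op_def)
    also have "\<dots> \<le> S y" unfolding S_def
      by (rule member_le_sum[OF t(1)]) (auto simp: T(2))
    finally show ?thesis .
  qed
  have Scont: "continuous_map Y euclideanreal S" unfolding S_def
    using T(2) ks Ttop by (intro continuous_map_sum continuous_map_real_pow continuous_map_norm C0_cont) auto
  show False
  proof (cases "C = {}")
    case True
    have "norm (g y) \<le> 1/2" for y
    proof (cases "y \<in> topspace Y")
      case True then show ?thesis using \<open>C = {}\<close> by (auto simp: C_def)
    next
      case False then show ?thesis using C0_out[OF g False] by simp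
    qed
    then have "norm (\<phi> g) \<le> 1/2" by (rule bound2[OF g])
    then show False using pg by simp
  next
    case False
    have "compactin euclideanreal (S ` C)" using image_compactin[OF Ccpt Scont] .
    then have "compact (S ` C)" by (simp add: compactin_euclidean_iff)
    then obtain m where m: "m \<in> S ` C" "\<And>z. z \<in> S ` C \<Longrightarrow> m \<le> z"
      using compact_attains_inf[of "S ` C"] False by blast
    have mpos: "0 < m" using m(1) Spos by blast
    define t where "t y = complex_of_real (1 / max (S y) m)" for y
    have tc: "continuous_map Y euclidean t" unfolding t_def
    proof (rule cm_comp[of _ _ complex_of_real])
      show "continuous_map Y euclideanreal (\<lambda>x. 1 / max (S x) m)"
        using mpos by (intro continuous_map_real_divide continuous_map_real_max Scont) auto
    qed (intro continuous_intros)
    have tb: "norm (t y) \<le> 1 / m" for y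
    proof -
      have "\<bar>1 / max (S y) m\<bar> \<le> 1 / m" using mpos by (simp add: frac_le)
      then show ?thesis unfolding t_def by (simp only: norm_of_real)
    qed
    define u where "u y = t y * g y" for y
    have u: "u \<in> C0 Y" unfolding u_def by (rule C0_bounded_mult[OF g tc tb])
    define r where "r y = g y - s y * u y" for y
    have pr: "\<phi> r = 1" unfolding r_def using diff[OF g C0_mul[OF s u]] mul'[OF s u] ps pg by simp
    have r: "r \<in> C0 Y" unfolding r_def using C0_add[OF g C0_scale[OF C0_mul[OF s u], of "-1"]] by simp
    have "norm (r y) \<le> 1/2" for y
    proof -
      have req: "r y = complex_of_real (1 - S y / max (S y) m) * g y"
        by (simp add: r_def sS u_def t_def algebra_simps)
      show ?thesis
      proof (cases "y \<in> C")
        case True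
        then have "m \<le> S y" using m(2) by blast
        then have "S y / max (S y) m = 1" using Spos[OF True] by simp
        then show ?thesis using req by simp
      next
        case False
        have ng: "norm (g y) \<le> 1/2"
        proof (cases "y \<in> topspace Y")
          case True then show ?thesis using False by (auto simp: C_def)
        next
          case False then show ?thesis using C0_out[OF g False] by simp
        qed
        have "0 \<le> S y / max (S y) m" using S0 mpos by simp
        moreover have "S y / max (S y) m \<le> 1" using S0[of y] mpos by (simp add: divide_le_eq_1 less_max_iff_disj)
        ultimately have "\<bar>1 - S y / max (S y) m\<bar> \<le> 1" by simp
        then have "norm (r y) \<le> 1 * norm (g y)" unfolding req norm_mult norm_of_real
          by (rule mult_right_mono) simp
        then show ?thesis using ng by simp
      qed
    qed
    then have "norm (\<phi> r) \<le> 1/2" by (rule bound2[OF r])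
    then show False using pr by simp
  qed
qed

lemma point:
  assumes f0: "f0 \<in> C0 Y" "\<phi> f0 \<noteq> 0"
  shows "\<exists>y\<in>topspace Y. \<forall>f\<in>C0 Y. \<phi> f = f y"
proof -
  obtain y where y: "y \<in> topspace Y" "\<And>k. k \<in> C0 Y \<Longrightarrow> \<phi> k = 0 \<Longrightarrow> k y = 0"
    using kernel_point[OF f0] by blast
  define g where "g y = (1 / \<phi> f0) * f0 y" for y
  have g: "g \<in> C0 Y" unfolding g_def by (rule C0_scale[OF f0(1)])
  have "\<phi> g = (1 / \<phi> f0) * \<phi> f0" unfolding g_def by (rule scl[OF f0(1)])
  then have pg: "\<phi> g = 1" using f0(2) by simp
  have key: "f y = \<phi> f * g y" if f: "f \<in> C0 Y" for f
  proof -
    have k: "(\<lambda>z. f z - \<phi> f * g z) \<in> C0 Y"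
      using C0_add[OF f C0_scale[OF g, of "- \<phi> f"]] by simp
    have "\<phi> (\<lambda>z. f z - \<phi> f * g z) = 0"
      using diff[OF f C0_scale[OF g]] scl[OF g] pg by simp
    from y(2)[OF k this] show ?thesis by simp
  qed
  have "g y * g y = \<phi> g * \<phi> g * g y" using key[OF C0_mul[OF g g]] mul'[OF g g] by simp
  then have gy: "g y = 0 \<or> g y = 1" using pg by (metis mult_cancel_right2 mult.right_neutral mult_1 mult_zero_left mult_cancel_left)
  obtain r where r: "(\<lambda>x. complex_of_real (r x)) \<in> C0 Y" "r y = 1"
    using bump[OF lc hs openin_topspace y(1)] by metis
  have "g y \<noteq> 0"
  proof
    assume "g y = 0"
    then show False using key[OF r(1)] r(2) by simp
  qed
  then have "g y = 1" using gy by blast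
  then show ?thesis using key y(1) by auto
qed

end



lemma bump2:
  assumes lc: "locally_compact_space Y" and hs: "Hausdorff_space Y" and V: "openin Y V" "y \<in> V"
  shows "\<exists>f\<in>C0 Y. f y = 1 \<and> (\<forall>z. z \<notin> V \<longrightarrow> f z = 0)"
proof -
  obtain r where r: "(\<lambda>x. complex_of_real (r x)) \<in> C0 Y" "r y = 1" "\<And>x. 0 \<le> r x \<and> r x \<le> 1"
    "\<And>x. x \<notin> V \<Longrightarrow> r x = 0"
    by (rule bump[OF lc hs V]) blast
  show ?thesis using r by (intro bexI[OF _ r(1)]) auto
qed

lemma sepY:
  assumes lc: "locally_compact_space Y" and hs: "Hausdorff_space Y"
    and y: "y1 \<in> topspace Y" "y2 \<in> topspace Y" "y1 \<noteq> y2"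
  obtains f where "f \<in> C0 Y" "f y1 = 1" "f y2 = 0"
proof -
  have "closedin Y {y2}" using closedin_t1_singleton[OF Hausdorff_imp_t1_space[OF hs] y(2)] .
  then have op: "openin Y (topspace Y - {y2})" by (simp add: closedin_def)
  have y1': "y1 \<in> topspace Y - {y2}" using y by blast
  obtain r where r: "(\<lambda>x. complex_of_real (r x)) \<in> C0 Y" "r y1 = 1" "\<And>x. x \<notin> topspace Y - {y2} \<Longrightarrow> r x = 0"
    "\<And>x. 0 \<le> r x \<and> r x \<le> 1"
    by (rule bump[OF lc hs op y1']) blast
  have "r y2 = 0" by (rule r(3)) simp
  then show ?thesis using r(1,2) by (intro that[of "\<lambda>x. complex_of_real (r x)"]) auto
qed

locale pull =
  fixes G :: "('g, 'm) monoid_scheme" and TG :: "'g topology"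
    and TX :: "'x topology" and act :: "'x \<Rightarrow> 'g \<Rightarrow> 'x"
    and TY :: "'y topology" and actY :: "'y \<Rightarrow> 'g \<Rightarrow> 'y"
    and chi :: "('y \<Rightarrow> complex) \<Rightarrow> 'x mult"
  assumes tg: "topological_group G TG"
    and lcX: "locally_compact_space TX" and hsX: "Hausdorff_space TX"
    and lcY: "locally_compact_space TY" and hsY: "Hausdorff_space TY"
    and raX: "right_action G TG TX act" and raY: "right_action G TG TY actY"
    and via: "G_C0_algebra_via G TX (transl TX act) TY actY chi"
begin

abbreviation "A \<equiv> C0 TX"

lemma via_all: "(\<forall>f\<in>C0 TY. chi f \<in> center_multipliers A) \<and> (\<forall>f\<in>C0 TY. \<forall>h\<in>C0 TY. chi (\<lambda>y. f y + h y) = madd A (chi f) (chi h)) \<and> (\<forall>c. \<forall>f\<in>C0 TY. chi (\<lambda>y. c * f y) = mscale A c (chi f)) \<and> (\<forall>f\<in>C0 TY. \<forall>h\<in>C0 TY. chi (fmul f h) = mmult A (chi f) (chi h)) \<and> (\<forall>f\<in>C0 TY. chi (fstar f) = madj A (chi f)) \<and> (\<forall>g\<in>carrier G. \<forall>f\<in>C0 TY. chi (transl TY actY g f) = mact G A (transl TX act) g (chi f)) \<and> (\<forall>a\<in>A. \<forall>e>0. \<exists>(n::nat) fs bs. (\<forall>i<n. fs i \<in> C0 TY \<and> bs i \<in> A) \<and> (\<forall>x\<in>topspace TX. norm (a x - (\<Sum>i<n. fst (chi (fs i)) (bs i) x)) < e))"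
  using via unfolding G_C0_algebra_via_def Let_def .

lemmas via_parts = via_all[THEN conjunct1] via_all[THEN conjunct2, THEN conjunct1] via_all[THEN conjunct2, THEN conjunct2, THEN conjunct1] via_all[THEN conjunct2, THEN conjunct2, THEN conjunct2, THEN conjunct1] via_all[THEN conjunct2, THEN conjunct2, THEN conjunct2, THEN conjunct2, THEN conjunct1] via_all[THEN conjunct2, THEN conjunct2, THEN conjunct2, THEN conjunct2, THEN conjunct2, THEN conjunct1] via_all[THEN conjunct2, THEN conjunct2, THEN conjunct2, THEN conjunct2, THEN conjunct2, THEN conjunct2]

lemma ctr: "f \<in> C0 TY \<Longrightarrow> chi f \<in> multipliers A"
  using via_parts(1) unfolding center_multipliers_def by blast
lemma hadd: "f \<in> C0 TY \<Longrightarrow> g \<in> C0 TY \<Longrightarrow> chi (\<lambda>y. f y + g y) = madd A (chi f) (chi g)"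
  using via_parts(2) by blast
lemma hscl: "f \<in> C0 TY \<Longrightarrow> chi (\<lambda>y. c * f y) = mscale A c (chi f)"
  using via_parts(3) by blast
lemma hmul: "f \<in> C0 TY \<Longrightarrow> g \<in> C0 TY \<Longrightarrow> chi (fmul f g) = mmult A (chi f) (chi g)"
  using via_parts(4) by blast
lemma hstar: "f \<in> C0 TY \<Longrightarrow> chi (fstar f) = madj A (chi f)"
  using via_parts(5) by blast
lemma heqv: "g \<in> carrier G \<Longrightarrow> f \<in> C0 TY \<Longrightarrow> chi (transl TY actY g f) = mact G A (transl TX act) g (chi f)"
  using via_parts(6) by blast
lemma hdense: "a \<in> A \<Longrightarrow> e > 0 \<Longrightarrow> \<exists>(n::nat) fs bs. (\<forall>i<n. fs i \<in> C0 TY \<and> bs i \<in> A) \<and>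
          (\<forall>x\<in>topspace TX. norm (a x - (\<Sum>i<n. fst (chi (fs i)) (bs i) x)) < e)"
  using via_parts(7) by blast

lemma LA: "f \<in> C0 TY \<Longrightarrow> b \<in> A \<Longrightarrow> fst (chi f) b \<in> A"
proof -
  assume f: "f \<in> C0 TY" and b: "b \<in> A"
  obtain L R where LR: "chi f = (L, R)" by (cases "chi f")
  have "L \<in> A \<rightarrow>\<^sub>E A" using ctr[OF f] unfolding LR multipliers_def by blast
  then show ?thesis using b LR by auto
qed

definition phix :: "'x \<Rightarrow> ('y \<Rightarrow> complex) \<Rightarrow> complex" where
  "phix x f = mfun A (chi f) x"

lemma Lap: "f \<in> C0 TY \<Longrightarrow> b \<in> A \<Longrightarrow> fst (chi f) b x = phix x f * b x"
  unfolding phix_def by (rule mult_apply(1)[OF lcX hsX ctr])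
lemma Rap: "f \<in> C0 TY \<Longrightarrow> b \<in> A \<Longrightarrow> snd (chi f) b x = phix x f * b x"
  unfolding phix_def by (rule mult_apply(2)[OF lcX hsX ctr])

lemma phix_char:
  assumes x: "x \<in> topspace TX"
  shows "charctr TY (phix x)"
proof -
  let ?w = "wit A x"
  have w: "?w \<in> A" "?w x \<noteq> 0" using wit[OF lcX hsX x] by auto
  have canc: "u = v" if "u * ?w x = v * ?w x" for u v using that w(2) by simp
  show ?thesis
  proof
    show "locally_compact_space TY" "Hausdorff_space TY" using lcY hsY by auto
    fix f g assume f: "f \<in> C0 TY" and g: "g \<in> C0 TY"
    show "phix x (\<lambda>y. f y + g y) = phix x f + phix x g"
    proof (rule canc)
      have "phix x (\<lambda>y. f y + g y) * ?w x = fst (chi (\<lambda>y. f y + g y)) ?w x"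
        using Lap[OF C0_add[OF f g] w(1)] by simp
      also have "\<dots> = fst (chi f) ?w x + fst (chi g) ?w x"
        using w(1) by (simp add: hadd[OF f g] madd_def)
      finally show "phix x (\<lambda>y. f y + g y) * ?w x = (phix x f + phix x g) * ?w x"
        using Lap[OF f w(1)] Lap[OF g w(1)] by (simp add: algebra_simps)
    qed
    show "phix x (fmul f g) = phix x f * phix x g"
    proof (rule canc)
      have "phix x (fmul f g) * ?w x = fst (chi (fmul f g)) ?w x"
        using Lap[OF C0_fmul[OF f g] w(1)] by simp
      also have "\<dots> = fst (chi f) (fst (chi g) ?w) x"
        using w(1) by (simp add: hmul[OF f g] mmult_def compose_def)
      also have "\<dots> = phix x f * (phix x g * ?w x)"
        using Lap[OF f LA[OF g w(1)]] Lap[OF g w(1)] by simp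
      finally show "phix x (fmul f g) * ?w x = (phix x f * phix x g) * ?w x" by simp
    qed
  next
    fix c f assume f: "f \<in> C0 TY"
    show "phix x (\<lambda>y. c * f y) = c * phix x f"
    proof (rule canc)
      have "phix x (\<lambda>y. c * f y) * ?w x = fst (chi (\<lambda>y. c * f y)) ?w x"
        using Lap[OF C0_scale[OF f] w(1)] by simp
      also have "\<dots> = c * fst (chi f) ?w x"
        using w(1) by (simp add: hscl[OF f] mscale_def)
      finally show "phix x (\<lambda>y. c * f y) * ?w x = (c * phix x f) * ?w x"
        using Lap[OF f w(1)] by simp
    qed
  next
    fix f assume f: "f \<in> C0 TY"
    show "phix x (fstar f) = cnj (phix x f)"
    proof (rule canc)
      have fw: "fstar ?w \<in> A" using C0_fstar[OF w(1)] .
      have "phix x (fstar f) * ?w x = fst (chi (fstar f)) ?w x"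
        using Lap[OF C0_fstar[OF f] w(1)] by simp
      also have "\<dots> = fstar (snd (chi f) (fstar ?w)) x"
        using w(1) by (simp add: hstar[OF f] madj_def)
      also have "\<dots> = cnj (phix x f) * ?w x"
        using Rap[OF f fw] by (simp add: fstar_def)
      finally show "phix x (fstar f) * ?w x = cnj (phix x f) * ?w x" .
    qed
  qed
qed

lemma phix_nz:
  assumes x: "x \<in> topspace TX"
  shows "\<exists>f\<in>C0 TY. phix x f \<noteq> 0"
proof (rule ccontr)
  assume nz: "\<not> ?thesis"
  let ?w = "wit A x"
  have w: "?w \<in> A" "?w x \<noteq> 0" using wit[OF lcX hsX x] by auto
  obtain n fs bs where fb: "\<forall>i<(n::nat). fs i \<in> C0 TY \<and> bs i \<in> A"
    and ap: "\<forall>z\<in>topspace TX. norm (?w z - (\<Sum>i<n. fst (chi (fs i)) (bs i) z)) < norm (?w x)"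
    using hdense[OF w(1), of "norm (?w x)"] w(2) by auto
  have "(\<Sum>i<n. fst (chi (fs i)) (bs i) x) = 0"
    using fb nz Lap by (intro sum.neutral) auto
  then show False using ap x by auto
qed

definition p :: "'x \<Rightarrow> 'y" where
  "p x = (SOME y. y \<in> topspace TY \<and> (\<forall>f\<in>C0 TY. phix x f = f y))"

lemma p_spec:
  assumes x: "x \<in> topspace TX"
  shows "p x \<in> topspace TY" "\<And>f. f \<in> C0 TY \<Longrightarrow> phix x f = f (p x)"
proof -
  interpret charctr TY "phix x" using phix_char[OF x] .
  obtain f0 where "f0 \<in> C0 TY" "phix x f0 \<noteq> 0" using phix_nz[OF x] by blast
  from point[OF this] have "\<exists>y. y \<in> topspace TY \<and> (\<forall>f\<in>C0 TY. phix x f = f y)" by blast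
  from someI_ex[OF this] show "p x \<in> topspace TY" "\<And>f. f \<in> C0 TY \<Longrightarrow> phix x f = f (p x)"
    unfolding p_def by auto
qed

lemma key: "f \<in> C0 TY \<Longrightarrow> b \<in> A \<Longrightarrow> x \<in> topspace TX \<Longrightarrow> fst (chi f) b x = f (p x) * b x"
  using Lap p_spec by simp

lemma p_cont: "continuous_map TX TY p"
  unfolding continuous_map_def
proof (intro conjI allI impI)
  show "p \<in> topspace TX \<rightarrow> topspace TY" using p_spec(1) by blast
  fix U assume U: "openin TY U"
  show "openin TX {x \<in> topspace TX. p x \<in> U}"
  proof (subst openin_subopen, intro ballI)
    fix x assume "x \<in> {x \<in> topspace TX. p x \<in> U}"
    then have x: "x \<in> topspace TX" "p x \<in> U" by auto
    obtain f where f: "f \<in> C0 TY" "f (p x) = 1" "\<And>z. z \<notin> U \<Longrightarrow> f z = 0"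
      using bump2[OF lcY hsY U x(2)] by blast
    let ?w = "wit A x"
    have w: "?w \<in> A" "?w x \<noteq> 0" using wit[OF lcX hsX x(1)] by auto
    define T where "T = {z \<in> topspace TX. ?w z \<in> -{0}} \<inter> {z \<in> topspace TX. fst (chi f) ?w z \<in> -{0}}"
    show "\<exists>T. openin TX T \<and> x \<in> T \<and> T \<subseteq> {x \<in> topspace TX. p x \<in> U}"
    proof (intro exI conjI)
      show "openin TX T" unfolding T_def
        by (intro openin_Int openin_continuous_map_preimage[OF C0_cont] w(1) LA[OF f(1) w(1)]) auto
      show "x \<in> T" using x w key[OF f(1) w(1) x(1)] f(2) LA[OF f(1) w(1)] by (simp add: T_def)
      show "T \<subseteq> {x \<in> topspace TX. p x \<in> U}"
      proof
        fix z assume "z \<in> T"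
        then have z: "z \<in> topspace TX" "fst (chi f) ?w z \<noteq> 0" by (auto simp: T_def)
        then have "f (p z) \<noteq> 0" using key[OF f(1) w(1) z(1)] by simp
        then show "z \<in> {x \<in> topspace TX. p x \<in> U}" using z f(3) by blast
      qed
    qed
  qed
qed

lemma p_eqv:
  assumes x: "x \<in> topspace TX" and g: "g \<in> carrier G"
  shows "p (act x g) = actY (p x) g"
proof (rule ccontr)
  assume ne: "p (act x g) \<noteq> actY (p x) g"
  have grp: "group G" using tg by (rule tg_group)
  have ig: "inv\<^bsub>G\<^esub> g \<in> carrier G" using grp g by simp
  have xg: "act x g \<in> topspace TX" using ra_in[OF raX x g] .
  have y1: "actY (p x) g \<in> topspace TY" using ra_in[OF raY p_spec(1)[OF x] g] .
  obtain f where f: "f \<in> C0 TY" "f (actY (p x) g) = 1" "f (p (act x g)) = 0"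
    using sepY[OF lcY hsY y1 p_spec(1)[OF xg] not_sym[OF ne]] by blast
  let ?w = "wit A x"
  have w: "?w \<in> A" "?w x \<noteq> 0" using wit[OF lcX hsX x] by auto
  have tw: "transl TX act (inv\<^bsub>G\<^esub> g) ?w \<in> A" using transl_C0[OF raX tg ig w(1)] .
  have "fst (chi (transl TY actY g f)) ?w x = transl TY actY g f (p x) * ?w x"
    using key[OF transl_C0[OF raY tg g f(1)] w(1) x] .
  also have "\<dots> = ?w x" using f(2) p_spec(1)[OF x] by (simp add: transl_def)
  finally have l: "fst (chi (transl TY actY g f)) ?w x = ?w x" .
  have "fst (chi (transl TY actY g f)) ?w x = transl TX act g (fst (chi f) (transl TX act (inv\<^bsub>G\<^esub> g) ?w)) x"
    using w(1) by (simp add: heqv[OF g f(1)] mact_def)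
  also have "\<dots> = fst (chi f) (transl TX act (inv\<^bsub>G\<^esub> g) ?w) (act x g)"
    using x by (simp add: transl_def)
  also have "\<dots> = f (p (act x g)) * transl TX act (inv\<^bsub>G\<^esub> g) ?w (act x g)"
    using key[OF f(1) tw xg] .
  also have "\<dots> = 0" using f(3) by simp
  finally show False using l w(2) by simp
qed

end



context pull begin

definition pre :: "'y set \<Rightarrow> 'x set" where
  "pre U = {x \<in> topspace TX. p x \<in> U}"

lemma pre_open: "openin TY U \<Longrightarrow> openin TX (pre U)"
  unfolding pre_def by (rule openin_continuous_map_preimage[OF p_cont])

lemma pre_inv: "invariant_set G actY U \<Longrightarrow> invariant_set G act (pre U)"
  unfolding invariant_set_def pre_def using ra_in[OF raX] p_eqv by auto

lemma pre_cont:
  assumes "continuous_map (subtopology TY U) TG \<phi>"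
  shows "continuous_map (subtopology TX (pre U)) TG (\<lambda>x. \<phi> (p x))"
proof -
  have "continuous_map (subtopology TX (pre U)) (subtopology TY U) p"
    unfolding continuous_map_in_subtopology
    using continuous_map_from_subtopology[OF p_cont] by (auto simp: pre_def)
  from continuous_map_compose[OF this assms] show ?thesis by (simp add: o_def)
qed

lemma pull_cover:
  assumes "principal_cover G TG TY actY \<U>"
  shows "principal_cover G TG TX act (pre ` \<U>)"
  unfolding principal_cover_def
proof (intro conjI ballI)
  have U: "\<Union>\<U> = topspace TY" using assms by (simp add: principal_cover_def)
  show "\<Union> (pre ` \<U>) = topspace TX"
  proof
    show "\<Union> (pre ` \<U>) \<subseteq> topspace TX" unfolding pre_def by blast
    show "topspace TX \<subseteq> \<Union> (pre ` \<U>)"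
    proof
      fix x assume x: "x \<in> topspace TX"
      then have "p x \<in> \<Union>\<U>" using U p_spec(1)[OF x] by simp
      then obtain V where V: "V \<in> \<U>" "p x \<in> V" by blast
      have "x \<in> pre V" using x V(2) by (simp add: pre_def)
      then show "x \<in> \<Union> (pre ` \<U>)" using V(1) by blast
    qed
  qed
  fix W assume "W \<in> pre ` \<U>"
  then obtain U where U: "U \<in> \<U>" "W = pre U" by blast
  have "\<forall>U\<in>\<U>. openin TY U \<and> invariant_set G actY U \<and>
    (\<exists>\<phi>. continuous_map (subtopology TY U) TG \<phi> \<and> (\<forall>y\<in>U. \<forall>g\<in>carrier G. \<phi> (actY y g) = \<phi> y \<otimes>\<^bsub>G\<^esub> g))"
    using assms unfolding principal_cover_def by (rule conjunct2)
  note Pall = bspec[OF this U(1)]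
  note P = Pall[THEN conjunct1] Pall[THEN conjunct2, THEN conjunct1] Pall[THEN conjunct2, THEN conjunct2]
  show "openin TX W" using pre_open[OF P(1)] U(2) by simp
  show "invariant_set G act W" using pre_inv[OF P(2)] U(2) by simp
  obtain \<phi> where \<phi>: "continuous_map (subtopology TY U) TG \<phi>" "\<And>y g. y \<in> U \<Longrightarrow> g \<in> carrier G \<Longrightarrow> \<phi> (actY y g) = \<phi> y \<otimes>\<^bsub>G\<^esub> g"
    using P(3) by blast
  show "\<exists>\<phi>. continuous_map (subtopology TX W) TG \<phi> \<and> (\<forall>y\<in>W. \<forall>g\<in>carrier G. \<phi> (act y g) = \<phi> y \<otimes>\<^bsub>G\<^esub> g)"
  proof (intro exI conjI ballI)
    show "continuous_map (subtopology TX W) TG (\<lambda>x. \<phi> (p x))" using pre_cont[OF \<phi>(1)] U(2) by simp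
    fix y g assume y: "y \<in> W" and g: "g \<in> carrier G"
    have yy: "y \<in> topspace TX" "p y \<in> U" using y U(2) by (simp_all add: pre_def)
    show "\<phi> (p (act y g)) = \<phi> (p y) \<otimes>\<^bsub>G\<^esub> g" using p_eqv[OF yy(1) g] \<phi>(2)[OF yy(2) g] by simp
  qed
qed

lemma pull_principal: "principal_bundle G TG TY actY \<Longrightarrow> principal_bundle G TG TX act"
  unfolding principal_bundle_def using pull_cover by blast

end




lemma cont_local:
  assumes "\<And>x. x \<in> topspace X \<Longrightarrow> \<exists>N g. openin X N \<and> x \<in> N \<and> continuous_map X euclideanreal g \<and> (\<forall>z\<in>N. f z = g z)"
  shows "continuous_map X euclideanreal f"
  unfolding continuous_map_def
proof (intro conjI allI impI)
  show "f \<in> topspace X \<rightarrow> topspace euclideanreal" by simp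
  fix U :: "real set" assume U: "openin euclideanreal U"
  show "openin X {x \<in> topspace X. f x \<in> U}"
  proof (subst openin_subopen, intro ballI)
    fix x assume "x \<in> {x \<in> topspace X. f x \<in> U}"
    then have x: "x \<in> topspace X" "f x \<in> U" by auto
    obtain N g where N: "openin X N" "x \<in> N" "continuous_map X euclideanreal g" "\<And>z. z \<in> N \<Longrightarrow> f z = g z"
      using assms[OF x(1)] by blast
    define T where "T = N \<inter> {z \<in> topspace X. g z \<in> U}"
    show "\<exists>T. openin X T \<and> x \<in> T \<and> T \<subseteq> {x \<in> topspace X. f x \<in> U}"
    proof (intro exI conjI)
      show "openin X T" unfolding T_def using N(1) openin_continuous_map_preimage[OF N(3) U] by (rule openin_Int)
      show "x \<in> T" using x N(2) N(4)[of x] by (simp add: T_def)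
      show "T \<subseteq> {x \<in> topspace X. f x \<in> U}" using N(4) by (auto simp: T_def)
    qed
  qed
qed

locale pullnum = pull G TG TX act TY actY chi
  for G :: "('g, 'm) monoid_scheme" and TG :: "'g topology"
    and TX :: "'x topology" and act :: "'x \<Rightarrow> 'g \<Rightarrow> 'x"
    and TY :: "'y topology" and actY :: "'y \<Rightarrow> 'g \<Rightarrow> 'y"
    and chi :: "('y \<Rightarrow> complex) \<Rightarrow> 'x mult" +
  fixes \<U> :: "'y set set" and \<rho> :: "'y set \<Rightarrow> 'y \<Rightarrow> real"
  assumes pc: "principal_cover G TG TY actY \<U>"
  and rc: "\<And>U. U \<in> \<U> \<Longrightarrow> continuous_map TY euclideanreal (\<rho> U)"
  and rinv: "\<And>U y g. U \<in> \<U> \<Longrightarrow> y \<in> topspace TY \<Longrightarrow> g \<in> carrier G \<Longrightarrow> \<rho> U (actY y g) = \<rho> U y"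
  and rnn: "\<And>U y. U \<in> \<U> \<Longrightarrow> y \<in> topspace TY \<Longrightarrow> 0 \<le> \<rho> U y"
  and rsupp: "\<And>U. U \<in> \<U> \<Longrightarrow> TY closure_of {y \<in> topspace TY. \<rho> U y \<noteq> 0} \<subseteq> U"
  and rlf: "\<And>y. y \<in> topspace TY \<Longrightarrow> \<exists>W. openin TY W \<and> invariant_set G actY W \<and> y \<in> W \<and>
             finite {U\<in>\<U>. W \<inter> (TY closure_of {z \<in> topspace TY. \<rho> U z \<noteq> 0}) \<noteq> {}}"
  and rsum: "\<And>y. y \<in> topspace TY \<Longrightarrow> (\<Sum>U\<in>{U\<in>\<U>. \<rho> U y \<noteq> 0}. \<rho> U y) = 1"
begin

definition cs :: "'y set \<Rightarrow> 'y set" where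
  "cs U = TY closure_of {y \<in> topspace TY. \<rho> U y \<noteq> 0}"

definition FW :: "'y set \<Rightarrow> 'y set set" where
  "FW W = {U\<in>\<U>. W \<inter> cs U \<noteq> {}}"

definition rho' :: "'x set \<Rightarrow> 'x \<Rightarrow> real" where
  "rho' V x = (\<Sum>U\<in>{U\<in>\<U>. pre U = V \<and> \<rho> U (p x) \<noteq> 0}. \<rho> U (p x))"

lemma in_cs: "y \<in> topspace TY \<Longrightarrow> \<rho> U y \<noteq> 0 \<Longrightarrow> y \<in> cs U"
  unfolding cs_def by (rule subsetD[OF closure_of_subset]) auto

lemma nbhd: "y \<in> topspace TY \<Longrightarrow> \<exists>W. openin TY W \<and> invariant_set G actY W \<and> y \<in> W \<and> finite (FW W)"
  using rlf unfolding FW_def cs_def by blast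

lemma LF:
  assumes fin: "finite (FW W)" and z: "z \<in> topspace TX" "p z \<in> W"
  shows "rho' V z = (\<Sum>U\<in>{U\<in>FW W. pre U = V}. \<rho> U (p z))"
  unfolding rho'_def
proof (rule sum.mono_neutral_left)
  show "finite {U\<in>FW W. pre U = V}" using fin by simp
  show "{U\<in>\<U>. pre U = V \<and> \<rho> U (p z) \<noteq> 0} \<subseteq> {U\<in>FW W. pre U = V}"
  proof
    fix U assume "U \<in> {U\<in>\<U>. pre U = V \<and> \<rho> U (p z) \<noteq> 0}"
    then have U: "U \<in> \<U>" "pre U = V" "\<rho> U (p z) \<noteq> 0" by auto
    have "p z \<in> W \<inter> cs U" using in_cs[OF p_spec(1)[OF z(1)] U(3)] z(2) by blast
    then show "U \<in> {U\<in>FW W. pre U = V}" using U by (auto simp: FW_def)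
  qed
  show "\<forall>i\<in>{U\<in>FW W. pre U = V} - {U\<in>\<U>. pre U = V \<and> \<rho> U (p z) \<noteq> 0}. \<rho> i (p z) = 0"
    unfolding FW_def by blast
qed

lemma rho'_cont: "continuous_map TX euclideanreal (rho' V)"
proof (rule cont_local)
  fix x assume x: "x \<in> topspace TX"
  obtain W where W: "openin TY W" "p x \<in> W" "finite (FW W)" using nbhd[OF p_spec(1)[OF x]] by blast
  show "\<exists>N g. openin TX N \<and> x \<in> N \<and> continuous_map TX euclideanreal g \<and> (\<forall>z\<in>N. rho' V z = g z)"
  proof (intro exI conjI ballI)
    show "openin TX (pre W)" by (rule pre_open[OF W(1)])
    show "x \<in> pre W" using x W(2) by (simp add: pre_def)
    show "continuous_map TX euclideanreal (\<lambda>z. \<Sum>U\<in>{U\<in>FW W. pre U = V}. \<rho> U (p z))"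
    proof (rule continuous_map_sum)
      show "finite {U\<in>FW W. pre U = V}" using W(3) by simp
      fix U assume "U \<in> {U\<in>FW W. pre U = V}"
      then have "U \<in> \<U>" by (simp add: FW_def)
      from continuous_map_compose[OF p_cont rc[OF this]]
      show "continuous_map TX euclideanreal (\<lambda>z. \<rho> U (p z))" by (simp add: o_def)
    qed
    fix z assume "z \<in> pre W"
    then have "z \<in> topspace TX" "p z \<in> W" by (simp_all add: pre_def)
    then show "rho' V z = (\<Sum>U\<in>{U\<in>FW W. pre U = V}. \<rho> U (p z))" by (rule LF[OF W(3)])
  qed
qed

lemma CL:
  assumes z: "z \<in> TX closure_of {x \<in> topspace TX. rho' V x \<noteq> 0}"
  shows "\<exists>U\<in>\<U>. pre U = V \<and> p z \<in> cs U"
proof (rule ccontr)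
  assume nc: "\<not> ?thesis"
  have zt: "z \<in> topspace TX" using subsetD[OF closure_of_subset_topspace z] .
  obtain W where W: "openin TY W" "p z \<in> W" "finite (FW W)" using nbhd[OF p_spec(1)[OF zt]] by blast
  define F' where "F' = {U\<in>FW W. pre U = V}"
  have fF': "finite F'" using W(3) by (simp add: F'_def)
  have cl: "closedin TY (\<Union>(cs ` F'))"
    using fF' by (intro closedin_Union) (auto simp: cs_def)
  define N where "N = pre (W - \<Union>(cs ` F'))"
  have No: "openin TX N" unfolding N_def using W(1) cl by (intro pre_open openin_diff)
  have zN: "z \<in> N" unfolding N_def pre_def using zt W(2) nc by (auto simp: F'_def FW_def)
  obtain z' where z': "z' \<in> {x \<in> topspace TX. rho' V x \<noteq> 0}" "z' \<in> N"
    using z No zN unfolding in_closure_of by blast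
  have z't: "z' \<in> topspace TX" "p z' \<in> W" "\<And>U. U \<in> F' \<Longrightarrow> p z' \<notin> cs U"
    using z'(2) by (auto simp: N_def pre_def)
  have "rho' V z' = (\<Sum>U\<in>F'. \<rho> U (p z'))" unfolding F'_def by (rule LF[OF W(3) z't(1,2)])
  also have "\<dots> = 0"
  proof (rule sum.neutral, intro ballI)
    fix U assume U: "U \<in> F'"
    show "\<rho> U (p z') = 0" using in_cs[OF p_spec(1)[OF z't(1)]] z't(3)[OF U] by blast
  qed
  finally show False using z'(1) by simp
qed

lemma rho'_eq: "x \<in> topspace TX \<Longrightarrow> rho' V x = (\<Sum>U\<in>{U\<in>{U\<in>\<U>. \<rho> U (p x) \<noteq> 0}. pre U = V}. \<rho> U (p x))"
  unfolding rho'_def by (rule sum.cong) auto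

lemma num_X: "numerable_principal_bundle G TG TX act"
  unfolding numerable_principal_bundle_def
proof (rule exI[where x="pre ` \<U>"], rule exI[where x="rho'"], intro conjI)
  show "principal_cover G TG TX act (pre ` \<U>)" by (rule pull_cover[OF pc])
  show "\<forall>V\<in>pre ` \<U>. continuous_map TX euclideanreal (rho' V) \<and>
        (\<forall>y\<in>topspace TX. \<forall>g\<in>carrier G. rho' V (act y g) = rho' V y) \<and>
        (\<forall>y\<in>topspace TX. 0 \<le> rho' V y) \<and>
        TX closure_of {y \<in> topspace TX. rho' V y \<noteq> 0} \<subseteq> V"
  proof (intro ballI conjI)
    fix V assume V: "V \<in> pre ` \<U>"
    show "continuous_map TX euclideanreal (rho' V)" by (rule rho'_cont)
    fix y g assume y: "y \<in> topspace TX" and g: "g \<in> carrier G"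
    have py: "p y \<in> topspace TY" using p_spec(1)[OF y] .
    have e: "p (act y g) = actY (p y) g" using p_eqv[OF y g] .
    show "rho' V (act y g) = rho' V y"
      unfolding rho'_def e using rinv[OF _ py g] by (intro sum.cong) auto
  next
    fix V y assume V: "V \<in> pre ` \<U>" and y: "y \<in> topspace TX"
    show "0 \<le> rho' V y" unfolding rho'_def using rnn p_spec(1)[OF y] by (intro sum_nonneg) auto
  next
    fix V assume V: "V \<in> pre ` \<U>"
    show "TX closure_of {y \<in> topspace TX. rho' V y \<noteq> 0} \<subseteq> V"
    proof
      fix z assume z: "z \<in> TX closure_of {y \<in> topspace TX. rho' V y \<noteq> 0}"
      have zt: "z \<in> topspace TX" using subsetD[OF closure_of_subset_topspace z] .
      obtain U where U: "U \<in> \<U>" "pre U = V" "p z \<in> cs U" using CL[OF z] by blast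
      have "p z \<in> U" using rsupp[OF U(1)] U(3) by (auto simp: cs_def)
      then show "z \<in> V" using zt U(2) by (auto simp: pre_def)
    qed
  qed
  show "\<forall>y\<in>topspace TX. \<exists>W. openin TX W \<and> invariant_set G act W \<and> y \<in> W \<and>
          finite {V \<in> pre ` \<U>. W \<inter> TX closure_of {z \<in> topspace TX. rho' V z \<noteq> 0} \<noteq> {}}"
  proof
    fix x assume x: "x \<in> topspace TX"
    obtain W where W: "openin TY W" "invariant_set G actY W" "p x \<in> W" "finite (FW W)"
      using nbhd[OF p_spec(1)[OF x]] by blast
    show "\<exists>W. openin TX W \<and> invariant_set G act W \<and> x \<in> W \<and>
          finite {V \<in> pre ` \<U>. W \<inter> TX closure_of {z \<in> topspace TX. rho' V z \<noteq> 0} \<noteq> {}}"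
    proof (intro exI conjI)
      show "openin TX (pre W)" by (rule pre_open[OF W(1)])
      show "invariant_set G act (pre W)" by (rule pre_inv[OF W(2)])
      show "x \<in> pre W" using x W(3) by (simp add: pre_def)
      have "{V \<in> pre ` \<U>. pre W \<inter> TX closure_of {z \<in> topspace TX. rho' V z \<noteq> 0} \<noteq> {}} \<subseteq> pre ` FW W"
      proof
        fix V assume "V \<in> {V \<in> pre ` \<U>. pre W \<inter> TX closure_of {z \<in> topspace TX. rho' V z \<noteq> 0} \<noteq> {}}"
        then obtain z where z: "z \<in> pre W" "z \<in> TX closure_of {z \<in> topspace TX. rho' V z \<noteq> 0}" by blast
        obtain U where U: "U \<in> \<U>" "pre U = V" "p z \<in> cs U" using CL[OF z(2)] by blast
        have "p z \<in> W" using z(1) by (simp add: pre_def)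
        then have "U \<in> FW W" using U by (auto simp: FW_def)
        then show "V \<in> pre ` FW W" using U(2) by blast
      qed
      then show "finite {V \<in> pre ` \<U>. pre W \<inter> TX closure_of {z \<in> topspace TX. rho' V z \<noteq> 0} \<noteq> {}}"
        using W(4) finite_subset by blast
    qed
  qed
  show "\<forall>y\<in>topspace TX. (\<Sum>V\<in>{V \<in> pre ` \<U>. rho' V y \<noteq> 0}. rho' V y) = 1"
  proof
    fix x assume x: "x \<in> topspace TX"
    define y where "y = p x"
    have yt: "y \<in> topspace TY" using p_spec(1)[OF x] by (simp add: y_def)
    define I where "I = {U\<in>\<U>. \<rho> U y \<noteq> 0}"
    obtain W where W: "openin TY W" "y \<in> W" "finite (FW W)" using nbhd[OF yt] by blast
    have "I \<subseteq> FW W"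
    proof
      fix U assume "U \<in> I"
      then have U: "U \<in> \<U>" "\<rho> U y \<noteq> 0" by (auto simp: I_def)
      have "y \<in> W \<inter> cs U" using in_cs[OF yt U(2)] W(2) by blast
      then show "U \<in> FW W" using U(1) by (auto simp: FW_def)
    qed
    then have fI: "finite I" using W(3) finite_subset by blast
    have req: "rho' V x = (\<Sum>U\<in>{U\<in>I. pre U = V}. \<rho> U y)" for V
      using rho'_eq[OF x, of V] by (simp add: I_def y_def)
    have "(\<Sum>V\<in>{V \<in> pre ` \<U>. rho' V x \<noteq> 0}. rho' V x) = (\<Sum>V\<in>pre ` I. rho' V x)"
    proof (rule sum.mono_neutral_left)
      show "finite (pre ` I)" using fI by simp
      show "{V \<in> pre ` \<U>. rho' V x \<noteq> 0} \<subseteq> pre ` I"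
      proof
        fix V assume V: "V \<in> {V \<in> pre ` \<U>. rho' V x \<noteq> 0}"
        then have "{U\<in>I. pre U = V} \<noteq> {}" using req[of V] by force
        then show "V \<in> pre ` I" by blast
      qed
      show "\<forall>i\<in>pre ` I - {V \<in> pre ` \<U>. rho' V x \<noteq> 0}. rho' i x = 0"
        unfolding I_def by blast
    qed
    also have "\<dots> = (\<Sum>V\<in>pre ` I. \<Sum>U\<in>{U\<in>I. pre U = V}. \<rho> U y)"
      using req by simp
    also have "\<dots> = (\<Sum>U\<in>I. \<rho> U y)"
      by (rule sum.group[OF fI]) (use fI in auto)
    also have "\<dots> = 1" unfolding I_def by (rule rsum[OF yt])
    finally show "(\<Sum>V\<in>{V \<in> pre ` \<U>. rho' V x \<noteq> 0}. rho' V x) = 1" .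
  qed
qed

end

context pull begin

lemma pull_numerable': "numerable_principal_bundle G TG TY actY \<Longrightarrow> numerable_principal_bundle G TG TX act"
proof -
  assume "numerable_principal_bundle G TG TY actY"
  then obtain \<U> \<rho> where H: "principal_cover G TG TY actY \<U>"
        "\<forall>U\<in>\<U>. continuous_map TY euclideanreal (\<rho> U) \<and>
           (\<forall>y\<in>topspace TY. \<forall>g\<in>carrier G. \<rho> U (actY y g) = \<rho> U y) \<and>
           (\<forall>y\<in>topspace TY. 0 \<le> \<rho> U y) \<and>
           TY closure_of {y \<in> topspace TY. \<rho> U y \<noteq> 0} \<subseteq> U"
        "\<forall>y\<in>topspace TY. \<exists>W. openin TY W \<and> invariant_set G actY W \<and> y \<in> W \<and>
           finite {U\<in>\<U>. W \<inter> (TY closure_of {z \<in> topspace TY. \<rho> U z \<noteq> 0}) \<noteq> {}}"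
        "\<forall>y\<in>topspace TY. (\<Sum>U\<in>{U\<in>\<U>. \<rho> U y \<noteq> 0}. \<rho> U y) = 1"
    unfolding numerable_principal_bundle_def by blast
  interpret pullnum G TG TX act TY actY chi \<U> \<rho>
  proof (unfold_locales)
    show "principal_cover G TG TY actY \<U>" by (rule H(1))
    show "\<And>U. U \<in> \<U> \<Longrightarrow> continuous_map TY euclideanreal (\<rho> U)" using H(2) by blast
    show "\<And>U y g. U \<in> \<U> \<Longrightarrow> y \<in> topspace TY \<Longrightarrow> g \<in> carrier G \<Longrightarrow> \<rho> U (actY y g) = \<rho> U y" using H(2) by blast
    show "\<And>U y. U \<in> \<U> \<Longrightarrow> y \<in> topspace TY \<Longrightarrow> 0 \<le> \<rho> U y" using H(2) by blast
    show "\<And>U. U \<in> \<U> \<Longrightarrow> TY closure_of {y \<in> topspace TY. \<rho> U y \<noteq> 0} \<subseteq> U" using H(2) by blast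
    show "\<And>y. y \<in> topspace TY \<Longrightarrow> \<exists>W. openin TY W \<and> invariant_set G actY W \<and> y \<in> W \<and>
             finite {U\<in>\<U>. W \<inter> (TY closure_of {z \<in> topspace TY. \<rho> U z \<noteq> 0}) \<noteq> {}}" using H(3) by blast
    show "\<And>y. y \<in> topspace TY \<Longrightarrow> (\<Sum>U\<in>{U\<in>\<U>. \<rho> U y \<noteq> 0}. \<rho> U y) = 1" using H(4) by blast
  qed
  show ?thesis by (rule num_X)
qed

end

theorem mainTheorem9:
  fixes G :: "('g, 'm) monoid_scheme" and TG :: "'g topology"
    and TX :: "'x topology" and act :: "'x \<Rightarrow> 'g \<Rightarrow> 'x"
  assumes "topological_group G TG"
    and "locally_compact_space TG" and "Hausdorff_space TG"
    and "locally_compact_space TX" and "Hausdorff_space TX"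
    and "right_action G TG TX act"
  shows "((\<forall>(TY :: 'y topology) actY.
             principal_G_C0_algebra G TG TX (transl TX act) TY actY \<longrightarrow> principal_bundle G TG TX act) \<and>
          (principal_bundle G TG TX act \<longrightarrow>
             (\<exists>(TY :: 'x topology) actY. principal_G_C0_algebra G TG TX (transl TX act) TY actY)))
       \<and> ((\<forall>(TY :: 'y topology) actY.
             numerable_principal_G_C0_algebra G TG TX (transl TX act) TY actY \<longrightarrow>
               numerable_principal_bundle G TG TX act) \<and>
          (numerable_principal_bundle G TG TX act \<longrightarrow>
             (\<exists>(TY :: 'x topology) actY. numerable_principal_G_C0_algebra G TG TX (transl TX act) TY actY)))"
proof -
  note tg = assms(1) and lcX = assms(4) and hsX = assms(5) and raX = assms(6)
  have bk: "principal_G_C0_algebra G TG TX (transl TX act) TX act" if "principal_bundle G TG TX act"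
    unfolding principal_G_C0_algebra_def using lcX hsX raX that chiX_via[OF lcX hsX tg raX] by (intro conjI exI)
  have num_pb: "principal_bundle G TG TX act" if np: "numerable_principal_bundle G TG TX act"
  proof -
    obtain \<U> \<rho> where "principal_cover G TG TX act \<U>" using np unfolding numerable_principal_bundle_def by blast
    then show ?thesis unfolding principal_bundle_def by blast
  qed
  have fwd: "principal_bundle G TG TX act \<and> (numerable_principal_bundle G TG TY actY \<longrightarrow> numerable_principal_bundle G TG TX act)"
    if pa: "principal_G_C0_algebra G TG TX (transl TX act) TY actY" for TY :: "'y topology" and actY :: "'y \<Rightarrow> 'g \<Rightarrow> 'y"
  proof -
    obtain chi where lcY: "locally_compact_space TY" and hsY: "Hausdorff_space TY"
      and raY: "right_action G TG TY actY" and pbY: "principal_bundle G TG TY actY"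
      and via: "G_C0_algebra_via G TX (transl TX act) TY actY chi"
      using pa unfolding principal_G_C0_algebra_def by blast
    interpret pull G TG TX act TY actY chi
      using tg lcX hsX lcY hsY raX raY via by unfold_locales
    show ?thesis using pull_principal[OF pbY] pull_numerable' by blast
  qed
  show ?thesis
  proof (intro conjI allI impI)
    fix TY :: "'y topology" and actY
    assume "principal_G_C0_algebra G TG TX (transl TX act) TY actY"
    then show "principal_bundle G TG TX act" using fwd by blast
  next
    assume "principal_bundle G TG TX act"
    then show "\<exists>(TY :: 'x topology) actY. principal_G_C0_algebra G TG TX (transl TX act) TY actY"
      using bk by blast
  next
    fix TY :: "'y topology" and actY
    assume "numerable_principal_G_C0_algebra G TG TX (transl TX act) TY actY"
    then show "numerable_principal_bundle G TG TX act"
      using fwd unfolding numerable_principal_G_C0_algebra_def by blast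
  next
    assume "numerable_principal_bundle G TG TX act"
    then show "\<exists>(TY :: 'x topology) actY. numerable_principal_G_C0_algebra G TG TX (transl TX act) TY actY"
      using bk num_pb unfolding numerable_principal_G_C0_algebra_def by blast
  qed
qed


end
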